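(* Let $G$ be a finite discounted stochastic game and let $\epsilon > 0$. There exists $\xi = \xi(\epsilon, G) > 0$ such that, whenever $\bm{\Pi} = \times_{i\in\mathcal{N}}\Pi^i$ with $\Pi^i \subset \Delta^i$ finite is a quantization of $\bm{\Delta}$ into bins of radius no greater than $\xi$ (i.e. every $\bm{\gamma}\in\bm{\Delta}$ lies within $d$-distance $\xi$ of some element of $\bm{\Pi}$), we have $\bm{\Pi} \cap \bm{\Delta}^{\epsilon}_{\rm eq} \neq \varnothing$.
   Context: A finite discounted stochastic game is $G = (\mathcal{N}, \mathbb{X}, \{\mathbb{U}^i\}, \{c^i\}, \{\beta^i\}, P, \nu_0)$, with finite player set $\mathcal{N}$, finite state set $\mathbb{X}$, finite action sets $\mathbb{U}^i$, joint action set $\textbf{U}=\times_i\mathbb{U}^i$, stage costs $c^i:\mathbb{X}\times\textbf{U}\to\mathbb{R}$, discount factors $\beta^i\in[0,1)$, transition kernel $P(\cdot\mid x,\textbf{u})$ and initial distribution $\nu_0$. A stationary policy of player $i$ is a stochastic kernel $\gamma^i$ from $\mathbb{X}$ to $\mathbb{U}^i$; $\Delta^i$ is the set of these, $\bm{\Delta}=\times_i\Delta^i$, with metric $d(\bm{\gamma},\bm{\pi}) = \max\{|\gamma^i(a^i\mid s)-\pi^i(a^i\mid s)| : i, a^i, s\}$. Player $i$'s cost is $J^i_x(\bm{\gamma}) = E^{\bm{\gamma}}[\sum_{t\ge0}(\beta^i)^t c^i(x_t,\textbf{u}_t)\mid x_0=x]$. $\gamma^i$ is an $\epsilon$-best-response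 to $\bm{\gamma}^{-i}=(\gamma^j)_{j\ne i}$ if $J^i_x(\gamma^i,\bm{\gamma}^{-i})\le\inf_{\pi^i\in\Delta^i}J^i_x(\pi^i,\bm{\gamma}^{-i})+\epsilon$ for all $x$; $\bm{\Delta}^\epsilon_{\rm eq}$ is the set of joint policies in which every player is $\epsilon$-best-responding. *)

theory Defs
  imports "HOL-Analysis.Analysis" "HOL-Library.FuncSet"
begin

text \<open>Players: finite type 'i. States: finite type 'x. Actions of player i: finite nonempty
  set U i of a common action type 'a. Transition kernel P s u y, stage costs c i s u, discount factors beta i.
  (The initial distribution plays no role in the statement.)\<close>

definition joint_actions :: "('i \<Rightarrow> 'a set) \<Rightarrow> ('i \<Rightarrow> 'a) set" where
  "joint_actions U = Pi\<^sub>E UNIV U"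

definition valid_game ::
  "('i::finite \<Rightarrow> 'a set) \<Rightarrow> ('x::finite \<Rightarrow> ('i \<Rightarrow> 'a) \<Rightarrow> 'x \<Rightarrow> real)
   \<Rightarrow> ('i \<Rightarrow> real) \<Rightarrow> bool" where
  "valid_game U P beta \<longleftrightarrow>
     (\<forall>i. finite (U i) \<and> U i \<noteq> {}) \<and>
     (\<forall>s u y. P s u y \<ge> 0) \<and>
     (\<forall>s. \<forall>u\<in>joint_actions U. (\<Sum>y\<in>UNIV. P s u y) = 1) \<and>
     (\<forall>i. 0 \<le> beta i \<and> beta i < 1)"

text \<open>Stationary policies of player i: stochastic kernels from states to U i
  (represented as functions vanishing outside U i).\<close>
definition policies :: "('i \<Rightarrow> 'a set) \<Rightarrow> 'i \<Rightarrow> ('x \<Rightarrow> 'a \<Rightarrow> real) set" where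
  "policies U i = {g. (\<forall>s a. g s a \<ge> 0) \<and> (\<forall>s a. a \<notin> U i \<longrightarrow> g s a = 0)
                     \<and> (\<forall>s. (\<Sum>a\<in>U i. g s a) = 1)}"

definition joint_policies :: "('i \<Rightarrow> 'a set) \<Rightarrow> ('i \<Rightarrow> 'x \<Rightarrow> 'a \<Rightarrow> real) set" where
  "joint_policies U = {\<gamma>. \<forall>i. \<gamma> i \<in> policies U i}"

definition pol_dist :: "('i \<Rightarrow> 'a set) \<Rightarrow> ('i \<Rightarrow> 'x \<Rightarrow> 'a \<Rightarrow> real)
                        \<Rightarrow> ('i \<Rightarrow> 'x \<Rightarrow> 'a \<Rightarrow> real) \<Rightarrow> real" where
  "pol_dist U \<gamma> \<pi> = Max {\<bar>\<gamma> i s a - \<pi> i s a\<bar> | i s a. a \<in> U i}"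

text \<open>Probability of joint action u at state s under joint policy (independent randomization).\<close>
definition act_prob :: "('i::finite \<Rightarrow> 'x \<Rightarrow> 'a \<Rightarrow> real) \<Rightarrow> 'x \<Rightarrow> ('i \<Rightarrow> 'a) \<Rightarrow> real" where
  "act_prob \<gamma> s u = (\<Prod>i\<in>UNIV. \<gamma> i s (u i))"

primrec state_dist ::
  "('i::finite \<Rightarrow> 'a set) \<Rightarrow> ('x::finite \<Rightarrow> ('i \<Rightarrow> 'a) \<Rightarrow> 'x \<Rightarrow> real)
   \<Rightarrow> ('i \<Rightarrow> 'x \<Rightarrow> 'a \<Rightarrow> real) \<Rightarrow> 'x \<Rightarrow> nat \<Rightarrow> 'x \<Rightarrow> real" where
  "state_dist U P \<gamma> x 0 = (\<lambda>y. if y = x then 1 else 0)"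
| "state_dist U P \<gamma> x (Suc t) = (\<lambda>y. \<Sum>s\<in>UNIV. state_dist U P \<gamma> x t s *
       (\<Sum>u\<in>joint_actions U. act_prob \<gamma> s u * P s u y))"

definition exp_stage_cost ::
  "('i::finite \<Rightarrow> 'a set) \<Rightarrow> ('x::finite \<Rightarrow> ('i \<Rightarrow> 'a) \<Rightarrow> 'x \<Rightarrow> real)
   \<Rightarrow> ('i \<Rightarrow> 'x \<Rightarrow> ('i \<Rightarrow> 'a) \<Rightarrow> real) \<Rightarrow> 'i \<Rightarrow> 'x \<Rightarrow> ('i \<Rightarrow> 'x \<Rightarrow> 'a \<Rightarrow> real) \<Rightarrow> nat \<Rightarrow> real" where
  "exp_stage_cost U P c i x \<gamma> t =
     (\<Sum>s\<in>UNIV. state_dist U P \<gamma> x t s * (\<Sum>u\<in>joint_actions U. act_prob \<gamma> s u * c i s u))"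

text \<open>J^i_x(gamma) = E[sum_t beta_i^t c^i(x_t,u_t) | x_0 = x] = sum_t beta_i^t E[c^i(x_t,u_t)].\<close>
definition cost_J ::
  "('i::finite \<Rightarrow> 'a set) \<Rightarrow> ('x::finite \<Rightarrow> ('i \<Rightarrow> 'a) \<Rightarrow> 'x \<Rightarrow> real)
   \<Rightarrow> ('i \<Rightarrow> 'x \<Rightarrow> ('i \<Rightarrow> 'a) \<Rightarrow> real) \<Rightarrow> ('i \<Rightarrow> real) \<Rightarrow> 'i \<Rightarrow> 'x
   \<Rightarrow> ('i \<Rightarrow> 'x \<Rightarrow> 'a \<Rightarrow> real) \<Rightarrow> real" where
  "cost_J U P c beta i x \<gamma> = (\<Sum>t. beta i ^ t * exp_stage_cost U P c i x \<gamma> t)"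

definition eps_best_response ::
  "('i::finite \<Rightarrow> 'a set) \<Rightarrow> ('x::finite \<Rightarrow> ('i \<Rightarrow> 'a) \<Rightarrow> 'x \<Rightarrow> real)
   \<Rightarrow> ('i \<Rightarrow> 'x \<Rightarrow> ('i \<Rightarrow> 'a) \<Rightarrow> real) \<Rightarrow> ('i \<Rightarrow> real) \<Rightarrow> real \<Rightarrow> 'i
   \<Rightarrow> ('i \<Rightarrow> 'x \<Rightarrow> 'a \<Rightarrow> real) \<Rightarrow> bool" where
  "eps_best_response U P c beta \<epsilon> i \<gamma> \<longleftrightarrow>
     (\<forall>x. cost_J U P c beta i x \<gamma> \<le>
            (INF \<pi>\<in>policies U i. cost_J U P c beta i x (\<gamma>(i := \<pi>))) + \<epsilon>)"

definition eps_equilibria ::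
  "('i::finite \<Rightarrow> 'a set) \<Rightarrow> ('x::finite \<Rightarrow> ('i \<Rightarrow> 'a) \<Rightarrow> 'x \<Rightarrow> real)
   \<Rightarrow> ('i \<Rightarrow> 'x \<Rightarrow> ('i \<Rightarrow> 'a) \<Rightarrow> real) \<Rightarrow> ('i \<Rightarrow> real) \<Rightarrow> real
   \<Rightarrow> ('i \<Rightarrow> 'x \<Rightarrow> 'a \<Rightarrow> real) set" where
  "eps_equilibria U P c beta \<epsilon> =
     {\<gamma>\<in>joint_policies U. \<forall>i. eps_best_response U P c beta \<epsilon> i \<gamma>}"

end

theory Submission
  imports Defs
begin
lemma approx_fp:
  fixes f :: "(nat \<Rightarrow> real) \<Rightarrow> nat \<Rightarrow> real" and n :: nat and L \<eta> :: real
  assumes into: "\<And>x. (\<forall>i<n. 0 \<le> x i \<and> x i \<le> 1) \<Longrightarrow> (\<forall>i<n. 0 \<le> f x i \<and> f x i \<le> 1)"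
    and lip: "\<And>x y d. (\<forall>i<n. 0 \<le> x i \<and> x i \<le> 1) \<Longrightarrow> (\<forall>i<n. 0 \<le> y i \<and> y i \<le> 1) \<Longrightarrow>
               (\<forall>i<n. \<bar>x i - y i\<bar> \<le> d) \<Longrightarrow> (\<forall>i<n. \<bar>f x i - f y i\<bar> \<le> L * d)"
    and L: "L \<ge> 0" and eta: "\<eta> > 0"
  shows "\<exists>z. (\<forall>i<n. 0 \<le> z i \<and> z i \<le> 1) \<and> (\<forall>i<n. \<bar>f z i - z i\<bar> \<le> \<eta>)"
proof -
  obtain p :: nat where p: "(L + 1) / \<eta> \<le> real p" using real_arch_simple by blast
  define pp where "pp = Suc p"
  have pp0: "pp > 0" and ppr: "(L + 1) / real pp \<le> \<eta>"
  proof -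
    show "pp > 0" by (simp add: pp_def)
    have "(L + 1) \<le> \<eta> * real pp" using p eta unfolding pp_def
      by (simp add: pos_divide_le_eq mult.commute) (smt (verit) mult_left_mono)
    then show "(L + 1) / real pp \<le> \<eta>" using pp_def by (simp add: divide_le_eq mult.commute)
  qed
  define emb :: "(nat \<Rightarrow> nat) \<Rightarrow> nat \<Rightarrow> real" where "emb q = (\<lambda>j. real (q j) / real pp)" for q
  define lab :: "(nat \<Rightarrow> nat) \<Rightarrow> nat \<Rightarrow> nat" where
    "lab q i = (if emb q i \<le> f (emb q) i \<and> emb q i \<noteq> 1 then 0 else 1)" for q i
  have cube: "\<forall>i<n. 0 \<le> emb q i \<and> emb q i \<le> 1" if "\<forall>i<n. q i \<le> pp" for q
    using that pp0 by (auto simp: emb_def divide_le_eq_1)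
  obtain q where q1: "\<forall>i<n. q i < pp"
    and q2: "\<forall>i<n. \<exists>r s. (\<forall>j<n. q j \<le> r j \<and> r j \<le> q j + 1) \<and>
               (\<forall>j<n. q j \<le> s j \<and> s j \<le> q j + 1) \<and> lab r i \<noteq> lab s i"
  proof (rule kuhn_lemma[OF pp0, of n lab])
    show "\<forall>x. (\<forall>i<n. x i \<le> pp) \<longrightarrow> (\<forall>i<n. lab x i = 0 \<or> lab x i = 1)"
      by (auto simp: lab_def)
    show "\<forall>x. (\<forall>i<n. x i \<le> pp) \<longrightarrow> (\<forall>i<n. x i = 0 \<longrightarrow> lab x i = 0)"
      using into cube by (auto simp: lab_def emb_def)
    show "\<forall>x. (\<forall>i<n. x i \<le> pp) \<longrightarrow> (\<forall>i<n. x i = pp \<longrightarrow> lab x i = 1)"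
      using pp0 by (auto simp: lab_def emb_def)
  qed auto
  define z where "z = emb q"
  have zc: "\<forall>i<n. 0 \<le> z i \<and> z i \<le> 1" unfolding z_def using q1 cube[of q] by (simp add: less_imp_le)
  have "\<bar>f z i - z i\<bar> \<le> \<eta>" if i: "i < n" for i
  proof -
    obtain r s where r: "\<forall>j<n. q j \<le> r j \<and> r j \<le> q j + 1" and s: "\<forall>j<n. q j \<le> s j \<and> s j \<le> q j + 1"
      and rs: "lab r i \<noteq> lab s i" using q2 i by blast
    have near: "\<forall>j<n. \<bar>emb t j - z j\<bar> \<le> 1 / real pp" if t: "\<forall>j<n. q j \<le> t j \<and> t j \<le> q j + 1" for t
    proof (intro allI impI)
      fix j assume "j < n"
      then have "real (q j) \<le> real (t j)" "real (t j) \<le> real (q j) + 1" using t by auto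
      then have "\<bar>real (t j) - real (q j)\<bar> \<le> 1" by linarith
      then have "\<bar>real (t j) - real (q j)\<bar> / real pp \<le> 1 / real pp" using pp0 by (simp add: divide_right_mono)
      then show "\<bar>emb t j - z j\<bar> \<le> 1 / real pp" unfolding z_def emb_def using pp0
        by (simp add: diff_divide_distrib[symmetric])
    qed
    have tc: "\<forall>j<n. 0 \<le> emb t j \<and> emb t j \<le> 1" if t: "\<forall>j<n. q j \<le> t j \<and> t j \<le> q j + 1" for t
      using cube[of t] t q1 by fastforce
    have key: "\<bar>f z i - z i\<bar> \<le> \<eta>" if
      ra: "emb r' i \<le> f (emb r') i" and sa: "f (emb s') i \<le> emb s' i"
      and r': "\<forall>j<n. q j \<le> r' j \<and> r' j \<le> q j + 1" and s': "\<forall>j<n. q j \<le> s' j \<and> s' j \<le> q j + 1" for r' s'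
    proof -
      have n1: "\<bar>emb r' i - z i\<bar> \<le> 1 / real pp" "\<bar>emb s' i - z i\<bar> \<le> 1 / real pp"
        using near[OF r'] near[OF s'] i by auto
      have "\<forall>j<n. \<bar>emb r' j - z j\<bar> \<le> 1 / real pp" using near[OF r'] .
      then have f1: "\<bar>f (emb r') i - f z i\<bar> \<le> L * (1 / real pp)"
        using lip[OF tc[OF r'] zc] i by blast
      have "\<forall>j<n. \<bar>emb s' j - z j\<bar> \<le> 1 / real pp" using near[OF s'] .
      then have f2: "\<bar>f (emb s') i - f z i\<bar> \<le> L * (1 / real pp)"
        using lip[OF tc[OF s'] zc] i by blast
      have "\<bar>f z i - z i\<bar> \<le> L * (1 / real pp) + 1 / real pp"
        using n1 f1 f2 ra sa by linarith
      also have "\<dots> = (L + 1) / real pp" by (simp add: add_divide_distrib)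
      finally show ?thesis using ppr by linarith
    qed
    have up: "f (emb t) i \<le> emb t i" if "lab t i = 1" "\<forall>j<n. q j \<le> t j \<and> t j \<le> q j + 1" for t
    proof (cases "emb t i = 1")
      case True then show ?thesis using into[OF tc[OF that(2)]] i by auto
    next
      case False then show ?thesis using that(1) by (auto simp: lab_def split: if_splits)
    qed
    have lo: "emb t i \<le> f (emb t) i" if "lab t i = 0" for t
      using that by (auto simp: lab_def split: if_splits)
    show ?thesis
    proof (cases "lab r i = 0")
      case True
      then have "lab s i = 1" using rs by (auto simp: lab_def split: if_splits)
      then show ?thesis using key[OF lo[OF True] up[OF _ s] r s] by blast
    next
      case False
      then have "lab r i = 1" "lab s i = 0" using rs by (auto simp: lab_def split: if_splits)
      then show ?thesis using key[OF lo[of s] up[of r] s r] s r by blast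
    qed
  qed
  then show ?thesis using zc by blast
qed

lemma prod_diff_le:
  fixes a b :: "'k \<Rightarrow> real"
  assumes "finite I" "\<forall>i\<in>I. 0 \<le> a i \<and> a i \<le> 1" "\<forall>i\<in>I. 0 \<le> b i \<and> b i \<le> 1"
    "\<forall>i\<in>I. \<bar>a i - b i\<bar> \<le> d"
  shows "\<bar>prod a I - prod b I\<bar> \<le> real (card I) * d"
  using assms
proof (induction I rule: finite_induct)
  case empty then show ?case by simp
next
  case (insert x F)
  have a1: "0 \<le> prod a F" "prod a F \<le> 1" using insert.prems by (auto intro: prod_nonneg prod_le_1)
  have b1: "0 \<le> b x" "b x \<le> 1" using insert.prems by auto
  have IH: "\<bar>prod a F - prod b F\<bar> \<le> real (card F) * d" using insert by auto
  have dx: "\<bar>a x - b x\<bar> \<le> d" using insert.prems by auto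
  have eq: "prod a (insert x F) - prod b (insert x F) = (a x - b x) * prod a F + b x * (prod a F - prod b F)"
    using insert.hyps by (simp add: algebra_simps)
  have "\<bar>(a x - b x) * prod a F\<bar> \<le> d"
    using a1 dx by (simp add: abs_mult) (metis abs_ge_zero mult_left_le order_trans)
  moreover have "\<bar>b x * (prod a F - prod b F)\<bar> \<le> real (card F) * d"
    using b1 IH by (simp add: abs_mult) (metis abs_ge_zero mult_left_le_one_le order_trans)
  ultimately have "\<bar>prod a (insert x F) - prod b (insert x F)\<bar> \<le> d + real (card F) * d"
    unfolding eq by (meson abs_triangle_ineq add_mono order_trans)
  then show ?case using insert.hyps by (simp add: algebra_simps)
qed

lemma ifmul: "(if b then 1 else 0) * (g::real) = (if b then g else 0)" by simp
lemma mulif: "(g::real) * (if b then 1 else 0) = (if b then g else 0)" by simp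

locale game =
  fixes U :: "'i::finite \<Rightarrow> 'a set"
    and P :: "'x::finite \<Rightarrow> ('i \<Rightarrow> 'a) \<Rightarrow> 'x \<Rightarrow> real"
    and c :: "'i \<Rightarrow> 'x \<Rightarrow> ('i \<Rightarrow> 'a) \<Rightarrow> real"
    and beta :: "'i \<Rightarrow> real"
  assumes valid: "valid_game U P beta"
begin

lemma finU: "finite (U i)" and neU: "U i \<noteq> {}" and Pnn: "0 \<le> P s u y"
  and Psum: "u \<in> joint_actions U \<Longrightarrow> (\<Sum>y\<in>UNIV. P s u y) = 1"
  and b0: "0 \<le> beta i" and b1: "beta i < 1"
  using valid unfolding valid_game_def by auto

abbreviation JA where "JA \<equiv> joint_actions U"
abbreviation JP :: "('i \<Rightarrow> 'x \<Rightarrow> 'a \<Rightarrow> real) set" where "JP \<equiv> joint_policies U"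

lemma finJA: "finite JA" unfolding joint_actions_def using finU by (intro finite_PiE) auto

lemma JA_mem: "u \<in> JA \<Longrightarrow> u i \<in> U i" unfolding joint_actions_def by auto

lemma pol_nn: "g \<in> policies U i \<Longrightarrow> 0 \<le> g s a" unfolding policies_def by auto
lemma pol_out: "g \<in> policies U i \<Longrightarrow> a \<notin> U i \<Longrightarrow> g s a = 0" unfolding policies_def by auto
lemma pol_sum: "g \<in> policies U i \<Longrightarrow> (\<Sum>a\<in>U i. g s a) = 1" unfolding policies_def by auto
lemma pol_le1: assumes "g \<in> policies U i" shows "g s a \<le> 1"
proof (cases "a \<in> U i")
  case True
  have "g s a \<le> (\<Sum>b\<in>U i. g s b)" using True pol_nn[OF assms] finU by (intro member_le_sum) auto
  then show ?thesis using pol_sum[OF assms] by simp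
next
  case False then show ?thesis using pol_out[OF assms] by simp
qed

lemma JP_pol: "\<gamma> \<in> JP \<Longrightarrow> \<gamma> i \<in> policies U i" unfolding joint_policies_def by auto
lemma JP_upd: "\<gamma> \<in> JP \<Longrightarrow> \<pi> \<in> policies U i \<Longrightarrow> \<gamma>(i := \<pi>) \<in> JP"
  unfolding joint_policies_def by auto

lemma act_nn: "\<gamma> \<in> JP \<Longrightarrow> 0 \<le> act_prob \<gamma> s u"
  unfolding act_prob_def by (intro prod_nonneg) (auto intro: pol_nn JP_pol)
lemma act_le1: "\<gamma> \<in> JP \<Longrightarrow> act_prob \<gamma> s u \<le> 1"
  unfolding act_prob_def by (intro prod_le_1) (auto intro: pol_nn pol_le1 JP_pol)
lemma act_sum: assumes "\<gamma> \<in> JP" shows "(\<Sum>u\<in>JA. act_prob \<gamma> s u) = 1"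
proof -
  have "(\<Sum>u\<in>JA. act_prob \<gamma> s u) = (\<Prod>i\<in>UNIV. \<Sum>a\<in>U i. \<gamma> i s a)"
    unfolding joint_actions_def act_prob_def by (subst prod_sum_PiE) (use finU in auto)
  also have "\<dots> = 1" using pol_sum[OF JP_pol[OF assms]] by simp
  finally show ?thesis .
qed

definition Mk where "Mk \<gamma> s y = (\<Sum>u\<in>JA. act_prob \<gamma> s u * P s u y)"
definition rw where "rw i \<gamma> s = (\<Sum>u\<in>JA. act_prob \<gamma> s u * c i s u)"
definition T where "T i \<gamma> W s = (\<Sum>u\<in>JA. act_prob \<gamma> s u * (c i s u + beta i * (\<Sum>y\<in>UNIV. P s u y * W y)))"
definition J where "J i \<gamma> x = cost_J U P c beta i x \<gamma>"
definition Cm where "Cm = (\<Sum>i\<in>UNIV. \<Sum>s\<in>UNIV. \<Sum>u\<in>JA. \<bar>c i s u\<bar>)"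
definition NJ where "NJ = real (card JA)"

lemma Cm_bound: assumes "u \<in> JA" shows "\<bar>c i s u\<bar> \<le> Cm"
proof -
  have "\<bar>c i s u\<bar> \<le> (\<Sum>u\<in>JA. \<bar>c i s u\<bar>)" using assms finJA by (intro member_le_sum) auto
  also have "\<dots> \<le> (\<Sum>s\<in>UNIV. \<Sum>u\<in>JA. \<bar>c i s u\<bar>)" by (intro member_le_sum) (auto intro: sum_nonneg)
  also have "\<dots> \<le> Cm" unfolding Cm_def by (intro member_le_sum) (auto intro: sum_nonneg)
  finally show ?thesis .
qed

lemma Cm_nn: "0 \<le> Cm" unfolding Cm_def by (auto intro: sum_nonneg)

lemma Mk_nn: "\<gamma> \<in> JP \<Longrightarrow> 0 \<le> Mk \<gamma> s y"
  unfolding Mk_def by (intro sum_nonneg mult_nonneg_nonneg act_nn Pnn) auto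

lemma Mk_sum: assumes "\<gamma> \<in> JP" shows "(\<Sum>y\<in>UNIV. Mk \<gamma> s y) = 1"
proof -
  have "(\<Sum>y\<in>UNIV. Mk \<gamma> s y) = (\<Sum>u\<in>JA. act_prob \<gamma> s u * (\<Sum>y\<in>UNIV. P s u y))"
    unfolding Mk_def by (subst sum.swap) (simp add: sum_distrib_left)
  also have "\<dots> = (\<Sum>u\<in>JA. act_prob \<gamma> s u)" by (intro sum.cong) (auto simp: Psum)
  finally show ?thesis using act_sum[OF assms] by simp
qed

lemma T_eq: "T i \<gamma> W s = rw i \<gamma> s + beta i * (\<Sum>y\<in>UNIV. Mk \<gamma> s y * W y)"
proof -
  have "T i \<gamma> W s = rw i \<gamma> s + (\<Sum>u\<in>JA. act_prob \<gamma> s u * (beta i * (\<Sum>y\<in>UNIV. P s u y * W y)))"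
    unfolding T_def rw_def by (simp add: distrib_left sum.distrib)
  also have "(\<Sum>u\<in>JA. act_prob \<gamma> s u * (beta i * (\<Sum>y\<in>UNIV. P s u y * W y)))
      = beta i * (\<Sum>y\<in>UNIV. Mk \<gamma> s y * W y)"
  proof -
    have "(\<Sum>u\<in>JA. act_prob \<gamma> s u * (beta i * (\<Sum>y\<in>UNIV. P s u y * W y)))
       = (\<Sum>u\<in>JA. \<Sum>y\<in>UNIV. beta i * (act_prob \<gamma> s u * P s u y * W y))"
      by (simp add: sum_distrib_left mult_ac)
    also have "\<dots> = (\<Sum>y\<in>UNIV. \<Sum>u\<in>JA. beta i * (act_prob \<gamma> s u * P s u y * W y))"
      by (rule sum.swap)
    also have "\<dots> = beta i * (\<Sum>y\<in>UNIV. Mk \<gamma> s y * W y)"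
      unfolding Mk_def by (simp add: sum_distrib_left sum_distrib_right mult_ac)
    finally show ?thesis .
  qed
  finally show ?thesis .
qed

lemma sd_back: "state_dist U P \<gamma> x (Suc t) z = (\<Sum>y\<in>UNIV. Mk \<gamma> x y * state_dist U P \<gamma> y t z)"
proof (induction t arbitrary: x z)
  case 0
  then show ?case by (simp add: ifmul mulif Mk_def)
next
  case (Suc t)
  have "state_dist U P \<gamma> x (Suc (Suc t)) z = (\<Sum>s\<in>UNIV. state_dist U P \<gamma> x (Suc t) s * Mk \<gamma> s z)"
    by (simp add: Mk_def)
  also have "\<dots> = (\<Sum>s\<in>UNIV. (\<Sum>y\<in>UNIV. Mk \<gamma> x y * state_dist U P \<gamma> y t s) * Mk \<gamma> s z)"
    using Suc by simp
  also have "\<dots> = (\<Sum>s\<in>UNIV. \<Sum>y\<in>UNIV. Mk \<gamma> x y * (state_dist U P \<gamma> y t s * Mk \<gamma> s z))"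
    by (simp add: sum_distrib_right mult.assoc)
  also have "\<dots> = (\<Sum>y\<in>UNIV. \<Sum>s\<in>UNIV. Mk \<gamma> x y * (state_dist U P \<gamma> y t s * Mk \<gamma> s z))"
    by (rule sum.swap)
  also have "\<dots> = (\<Sum>y\<in>UNIV. Mk \<gamma> x y * (\<Sum>s\<in>UNIV. state_dist U P \<gamma> y t s * Mk \<gamma> s z))"
    by (simp add: sum_distrib_left)
  also have "\<dots> = (\<Sum>y\<in>UNIV. Mk \<gamma> x y * state_dist U P \<gamma> y (Suc t) z)"
    by (simp add: Mk_def)
  finally show ?case .
qed

lemma sd_nn: "\<gamma> \<in> JP \<Longrightarrow> 0 \<le> state_dist U P \<gamma> x t y"
proof (induction t arbitrary: y)
  case 0 then show ?case by simp
next
  case (Suc t)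
  have "0 \<le> (\<Sum>s\<in>UNIV. state_dist U P \<gamma> x t s * Mk \<gamma> s y)"
    using Suc Mk_nn by (intro sum_nonneg mult_nonneg_nonneg) auto
  then show ?case by (simp add: Mk_def)
qed

lemma sd_sum: "\<gamma> \<in> JP \<Longrightarrow> (\<Sum>y\<in>UNIV. state_dist U P \<gamma> x t y) = 1"
proof (induction t)
  case 0 then show ?case by simp
next
  case (Suc t)
  have "(\<Sum>y\<in>UNIV. state_dist U P \<gamma> x (Suc t) y) = (\<Sum>y\<in>UNIV. \<Sum>s\<in>UNIV. state_dist U P \<gamma> x t s * Mk \<gamma> s y)"
    by (simp add: Mk_def)
  also have "\<dots> = (\<Sum>s\<in>UNIV. state_dist U P \<gamma> x t s * (\<Sum>y\<in>UNIV. Mk \<gamma> s y))"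
    by (subst sum.swap) (simp add: sum_distrib_left)
  also have "\<dots> = 1" using Suc Mk_sum by simp
  finally show ?case .
qed

lemma esc_eq: "exp_stage_cost U P c i x \<gamma> t = (\<Sum>s\<in>UNIV. state_dist U P \<gamma> x t s * rw i \<gamma> s)"
  by (simp add: exp_stage_cost_def rw_def)

lemma esc_0: "exp_stage_cost U P c i x \<gamma> 0 = rw i \<gamma> x"
  by (simp add: esc_eq ifmul)

lemma esc_Suc: "exp_stage_cost U P c i x \<gamma> (Suc t) = (\<Sum>y\<in>UNIV. Mk \<gamma> x y * exp_stage_cost U P c i y \<gamma> t)"
proof -
  have "exp_stage_cost U P c i x \<gamma> (Suc t) = (\<Sum>s\<in>UNIV. \<Sum>y\<in>UNIV. Mk \<gamma> x y * (state_dist U P \<gamma> y t s * rw i \<gamma> s))"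
    unfolding esc_eq sd_back by (simp add: sum_distrib_right mult.assoc)
  also have "\<dots> = (\<Sum>y\<in>UNIV. \<Sum>s\<in>UNIV. Mk \<gamma> x y * (state_dist U P \<gamma> y t s * rw i \<gamma> s))"
    by (rule sum.swap)
  also have "\<dots> = (\<Sum>y\<in>UNIV. Mk \<gamma> x y * exp_stage_cost U P c i y \<gamma> t)"
    unfolding esc_eq by (simp add: sum_distrib_left)
  finally show ?thesis .
qed

lemma rw_bound: assumes "\<gamma> \<in> JP" shows "\<bar>rw i \<gamma> s\<bar> \<le> Cm"
proof -
  have "\<bar>rw i \<gamma> s\<bar> \<le> (\<Sum>u\<in>JA. \<bar>act_prob \<gamma> s u * c i s u\<bar>)" unfolding rw_def by (rule sum_abs)
  also have "\<dots> \<le> (\<Sum>u\<in>JA. act_prob \<gamma> s u * Cm)"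
    using act_nn[OF assms] Cm_bound by (intro sum_mono) (simp add: abs_mult mult_left_mono)
  also have "\<dots> = Cm" using act_sum[OF assms] by (simp add: sum_distrib_right[symmetric])
  finally show ?thesis .
qed

lemma esc_bound: assumes "\<gamma> \<in> JP" shows "\<bar>exp_stage_cost U P c i x \<gamma> t\<bar> \<le> Cm"
proof -
  have "\<bar>exp_stage_cost U P c i x \<gamma> t\<bar> \<le> (\<Sum>s\<in>UNIV. \<bar>state_dist U P \<gamma> x t s * rw i \<gamma> s\<bar>)"
    unfolding esc_eq by (rule sum_abs)
  also have "\<dots> \<le> (\<Sum>s\<in>UNIV. state_dist U P \<gamma> x t s * Cm)"
    using sd_nn[OF assms] rw_bound[OF assms] by (intro sum_mono) (simp add: abs_mult mult_left_mono)
  also have "\<dots> = Cm" using sd_sum[OF assms] by (simp add: sum_distrib_right[symmetric])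
  finally show ?thesis .
qed

lemma summ: assumes "\<gamma> \<in> JP" shows "summable (\<lambda>t. beta i ^ t * exp_stage_cost U P c i x \<gamma> t)"
proof (rule summable_comparison_test')
  show "summable (\<lambda>t. Cm * beta i ^ t)"
    using b0 b1 by (intro summable_mult summable_geometric) auto
  show "norm (beta i ^ t * exp_stage_cost U P c i x \<gamma> t) \<le> Cm * beta i ^ t" for t
    using esc_bound[OF assms, of i x t] b0[of i] by (simp add: abs_mult) (metis mult.commute mult_left_mono zero_le_power)
qed

lemma bellman: assumes "\<gamma> \<in> JP" shows "J i \<gamma> x = T i \<gamma> (J i \<gamma>) x"
proof -
  define f where "f y t = beta i ^ t * exp_stage_cost U P c i y \<gamma> t" for y t
  have sf: "summable (f y)" for y unfolding f_def by (rule summ[OF assms])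
  have Jf: "J i \<gamma> y = suminf (f y)" for y unfolding J_def cost_J_def f_def by simp
  have fS: "f x (Suc t) = beta i * (\<Sum>y\<in>UNIV. Mk \<gamma> x y * f y t)" for t
    unfolding f_def esc_Suc by (simp add: sum_distrib_left mult_ac)
  have "(\<Sum>t. f x (Suc t)) = suminf (f x) - f x 0" by (rule suminf_split_head[OF sf])
  moreover have "(\<Sum>t. f x (Suc t)) = beta i * (\<Sum>y\<in>UNIV. Mk \<gamma> x y * suminf (f y))"
  proof -
    have "(\<Sum>t. f x (Suc t)) = (\<Sum>t. beta i * (\<Sum>y\<in>UNIV. Mk \<gamma> x y * f y t))" by (simp add: fS)
    also have "\<dots> = beta i * (\<Sum>t. (\<Sum>y\<in>UNIV. Mk \<gamma> x y * f y t))"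
      by (intro suminf_mult summable_sum summable_mult sf)
    also have "(\<Sum>t. (\<Sum>y\<in>UNIV. Mk \<gamma> x y * f y t)) = (\<Sum>y\<in>UNIV. \<Sum>t. Mk \<gamma> x y * f y t)"
      by (intro suminf_sum summable_mult sf)
    also have "\<dots> = (\<Sum>y\<in>UNIV. Mk \<gamma> x y * suminf (f y))"
      by (intro sum.cong refl suminf_mult sf)
    finally show ?thesis .
  qed
  ultimately have "suminf (f x) = f x 0 + beta i * (\<Sum>y\<in>UNIV. Mk \<gamma> x y * suminf (f y))" by simp
  then show ?thesis unfolding T_eq Jf by (simp add: f_def esc_0)
qed

end

lemma div_bound: fixes B C b :: real assumes "B \<le> C + b * B" "b < 1" shows "B \<le> C / (1 - b)"
  using assms by (simp add: pos_le_divide_eq algebra_simps)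

context game begin

definition Tset :: "('i \<times> 'x \<times> 'a) set" where "Tset = (SIGMA i:UNIV. SIGMA s:UNIV. U i)"

lemma finTset: "finite Tset" unfolding Tset_def using finU by (intro finite_SigmaI) auto

lemma Tset_ne: "Tset \<noteq> {}"
proof -
  obtain a where "a \<in> U undefined" using neU by blast
  then have "(undefined, undefined, a) \<in> Tset" unfolding Tset_def by auto
  then show ?thesis by blast
qed

lemma pd_eq: fixes \<gamma> \<pi> :: "'i \<Rightarrow> 'x \<Rightarrow> 'a \<Rightarrow> real" shows "pol_dist U \<gamma> \<pi> = Max ((\<lambda>(i,s,a). \<bar>\<gamma> i s a - \<pi> i s a\<bar>) ` Tset)"
  unfolding pol_dist_def
proof (rule arg_cong[where f=Max], intro set_eqI iffI)
  fix x assume "x \<in> {\<bar>\<gamma> i s a - \<pi> i s a\<bar> | i s a. a \<in> U i}"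
  then obtain i s a where "x = \<bar>\<gamma> i s a - \<pi> i s a\<bar>" "a \<in> U i" by blast
  then show "x \<in> (\<lambda>(i,s,a). \<bar>\<gamma> i s a - \<pi> i s a\<bar>) ` Tset"
    unfolding Tset_def by (intro image_eqI[where x="(i,s,a)"]) auto
next
  fix x assume "x \<in> (\<lambda>(i,s,a). \<bar>\<gamma> i s a - \<pi> i s a\<bar>) ` Tset"
  then show "x \<in> {\<bar>\<gamma> i s a - \<pi> i s a\<bar> | i s a. a \<in> U i}" unfolding Tset_def by auto
qed

lemma pd_ge: fixes \<gamma> \<pi> :: "'i \<Rightarrow> 'x \<Rightarrow> 'a \<Rightarrow> real" shows "a \<in> U i \<Longrightarrow> \<bar>\<gamma> i s a - \<pi> i s a\<bar> \<le> pol_dist U \<gamma> \<pi>"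
proof -
  assume a: "a \<in> U i"
  have "\<bar>\<gamma> i s a - \<pi> i s a\<bar> \<in> (\<lambda>(i,s,a). \<bar>\<gamma> i s a - \<pi> i s a\<bar>) ` Tset"
    using a unfolding Tset_def by (intro image_eqI[where x="(i,s,a)"]) auto
  then show ?thesis unfolding pd_eq by (intro Max_ge) (simp_all add: finTset)
qed

lemma pd_le: fixes \<gamma> \<pi> :: "'i \<Rightarrow> 'x \<Rightarrow> 'a \<Rightarrow> real" assumes "\<And>i s a. a \<in> U i \<Longrightarrow> \<bar>\<gamma> i s a - \<pi> i s a\<bar> \<le> e" shows "pol_dist U \<gamma> \<pi> \<le> e"
  unfolding pd_eq
  using assms finTset Tset_ne by (subst Max_le_iff) (auto simp: Tset_def)

lemma pd_nn: fixes \<gamma> \<pi> :: "'i \<Rightarrow> 'x \<Rightarrow> 'a \<Rightarrow> real" shows "0 \<le> pol_dist U \<gamma> \<pi>"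
proof -
  obtain a where "a \<in> U undefined" using neU by blast
  from pd_ge[OF this, of \<gamma> undefined \<pi>] show ?thesis by linarith
qed

lemma pd_sym: fixes \<gamma> \<pi> :: "'i \<Rightarrow> 'x \<Rightarrow> 'a \<Rightarrow> real" shows "pol_dist U \<gamma> \<pi> = pol_dist U \<pi> \<gamma>"
  unfolding pol_dist_def by (simp add: abs_minus_commute)

lemma act_diff: assumes "\<gamma> \<in> JP" "\<gamma>' \<in> JP" "pol_dist U \<gamma> \<gamma>' \<le> d" "u \<in> JA"
  shows "\<bar>act_prob \<gamma> s u - act_prob \<gamma>' s u\<bar> \<le> real CARD('i) * d"
  unfolding act_prob_def
proof (rule prod_diff_le[where I=UNIV, simplified])
  show "\<forall>i. 0 \<le> \<gamma> i s (u i) \<and> \<gamma> i s (u i) \<le> 1" "\<forall>i. 0 \<le> \<gamma>' i s (u i) \<and> \<gamma>' i s (u i) \<le> 1"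
    using assms by (auto intro: pol_nn pol_le1 JP_pol)
  show "\<forall>i. \<bar>\<gamma> i s (u i) - \<gamma>' i s (u i)\<bar> \<le> d"
  proof
    fix i
    show "\<bar>\<gamma> i s (u i) - \<gamma>' i s (u i)\<bar> \<le> d"
      using pd_ge[OF JA_mem[OF assms(4)], where \<gamma>=\<gamma> and \<pi>=\<gamma>' and s=s and i=i] assms(3) by linarith
  qed
qed simp

lemma PW_bound: assumes "u \<in> JA" "\<And>y. \<bar>W y\<bar> \<le> B" shows "\<bar>\<Sum>y\<in>UNIV. P s u y * W y\<bar> \<le> B"
proof -
  have "\<bar>\<Sum>y\<in>UNIV. P s u y * W y\<bar> \<le> (\<Sum>y\<in>UNIV. \<bar>P s u y * W y\<bar>)" by (rule sum_abs)
  also have "\<dots> \<le> (\<Sum>y\<in>UNIV. P s u y * B)"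
    using assms Pnn by (intro sum_mono) (simp add: abs_mult mult_left_mono)
  also have "\<dots> = B" using Psum[OF assms(1)] by (simp add: sum_distrib_right[symmetric])
  finally show ?thesis .
qed

lemma h_bound: assumes "u \<in> JA" "\<And>y. \<bar>W y\<bar> \<le> B"
  shows "\<bar>c i s u + beta i * (\<Sum>y\<in>UNIV. P s u y * W y)\<bar> \<le> Cm + beta i * B"
proof -
  have "\<bar>beta i * (\<Sum>y\<in>UNIV. P s u y * W y)\<bar> \<le> beta i * B"
    using PW_bound[OF assms] b0[of i] by (simp add: abs_mult mult_left_mono)
  then show ?thesis using Cm_bound[OF assms(1), of i s] by linarith
qed

lemma T_abs: assumes "\<gamma> \<in> JP" "\<And>y. \<bar>W y\<bar> \<le> B" shows "\<bar>T i \<gamma> W s\<bar> \<le> Cm + beta i * B"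
proof -
  have "\<bar>T i \<gamma> W s\<bar> \<le> (\<Sum>u\<in>JA. \<bar>act_prob \<gamma> s u * (c i s u + beta i * (\<Sum>y\<in>UNIV. P s u y * W y))\<bar>)"
    unfolding T_def by (rule sum_abs)
  also have "\<dots> \<le> (\<Sum>u\<in>JA. act_prob \<gamma> s u * (Cm + beta i * B))"
    using act_nn[OF assms(1)] h_bound assms(2) by (intro sum_mono) (simp add: abs_mult mult_left_mono)
  also have "\<dots> = Cm + beta i * B" using act_sum[OF assms(1)] by (simp add: sum_distrib_right[symmetric])
  finally show ?thesis .
qed

lemma J_bound: assumes "\<gamma> \<in> JP" shows "\<bar>J i \<gamma> s\<bar> \<le> Cm / (1 - beta i)"
proof -
  define B where "B = Max (range (\<lambda>y. \<bar>J i \<gamma> y\<bar>))"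
  have Bge: "\<bar>J i \<gamma> y\<bar> \<le> B" for y unfolding B_def by (rule Max_ge) auto
  have "B \<in> range (\<lambda>y. \<bar>J i \<gamma> y\<bar>)" unfolding B_def by (rule Max_in) auto
  then obtain y0 where "B = \<bar>J i \<gamma> y0\<bar>" by blast
  also have "\<dots> = \<bar>T i \<gamma> (J i \<gamma>) y0\<bar>" using bellman[OF assms] by simp
  also have "\<dots> \<le> Cm + beta i * B" by (rule T_abs[OF assms Bge])
  finally have "B \<le> Cm / (1 - beta i)" using b1 by (intro div_bound) auto
  then show ?thesis using Bge[of s] by linarith
qed

lemma compare: assumes "\<gamma> \<in> JP" "\<And>s. V s \<le> T i \<gamma> V s + \<eta>" "\<And>s. W s = T i \<gamma> W s"
  shows "V s \<le> W s + \<eta> / (1 - beta i)"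
proof -
  define D where "D = Max (range (\<lambda>y. V y - W y))"
  have Dge: "V y - W y \<le> D" for y unfolding D_def by (rule Max_ge) auto
  have "D \<in> range (\<lambda>y. V y - W y)" unfolding D_def by (rule Max_in) auto
  then obtain y0 where y0: "D = V y0 - W y0" by blast
  have TD: "T i \<gamma> V s - T i \<gamma> W s \<le> beta i * D" for s
  proof -
    have "T i \<gamma> V s - T i \<gamma> W s = (\<Sum>u\<in>JA. act_prob \<gamma> s u * (beta i * (\<Sum>y\<in>UNIV. P s u y * (V y - W y))))"
      unfolding T_def by (simp add: sum_subtractf[symmetric] algebra_simps sum_distrib_left)
    also have "\<dots> \<le> (\<Sum>u\<in>JA. act_prob \<gamma> s u * (beta i * D))"
    proof (rule sum_mono)
      fix u assume u: "u \<in> JA"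
      have "(\<Sum>y\<in>UNIV. P s u y * (V y - W y)) \<le> (\<Sum>y\<in>UNIV. P s u y * D)"
        using Pnn Dge by (intro sum_mono mult_left_mono) auto
      also have "\<dots> = D" using Psum[OF u] by (simp add: sum_distrib_right[symmetric])
      finally have "beta i * (\<Sum>y\<in>UNIV. P s u y * (V y - W y)) \<le> beta i * D"
        using b0 by (simp add: mult_left_mono)
      then show "act_prob \<gamma> s u * (beta i * (\<Sum>y\<in>UNIV. P s u y * (V y - W y))) \<le> act_prob \<gamma> s u * (beta i * D)"
        using act_nn[OF assms(1)] by (simp add: mult_left_mono)
    qed
    also have "\<dots> = beta i * D" using act_sum[OF assms(1)] by (simp add: sum_distrib_right[symmetric])
    finally show ?thesis .
  qed
  have "D \<le> \<eta> + beta i * D" using y0 assms(2)[of y0] assms(3)[of y0] TD[of y0] by linarith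
  then have "D \<le> \<eta> / (1 - beta i)" using b1 by (intro div_bound) auto
  then show ?thesis using Dge[of s] by linarith
qed

lemma T_diff: assumes "\<gamma> \<in> JP" "\<gamma>' \<in> JP" "pol_dist U \<gamma> \<gamma>' \<le> d" "\<And>y. \<bar>W y\<bar> \<le> B"
  shows "\<bar>T i \<gamma> W s - T i \<gamma>' W s\<bar> \<le> NJ * (real CARD('i) * d) * (Cm + beta i * B)"
proof -
  have "T i \<gamma> W s - T i \<gamma>' W s = (\<Sum>u\<in>JA. (act_prob \<gamma> s u - act_prob \<gamma>' s u) * (c i s u + beta i * (\<Sum>y\<in>UNIV. P s u y * W y)))"
    unfolding T_def by (simp add: sum_subtractf[symmetric] algebra_simps)
  also have "\<bar>\<dots>\<bar> \<le> (\<Sum>u\<in>JA. \<bar>(act_prob \<gamma> s u - act_prob \<gamma>' s u) * (c i s u + beta i * (\<Sum>y\<in>UNIV. P s u y * W y))\<bar>)"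
    by (rule sum_abs)
  also have "\<dots> \<le> (\<Sum>u\<in>JA. (real CARD('i) * d) * (Cm + beta i * B))"
  proof (intro sum_mono)
    fix u assume u: "u \<in> JA"
    show "\<bar>(act_prob \<gamma> s u - act_prob \<gamma>' s u) * (c i s u + beta i * (\<Sum>y\<in>UNIV. P s u y * W y))\<bar>
          \<le> (real CARD('i) * d) * (Cm + beta i * B)"
      unfolding abs_mult using act_diff[OF assms(1-3) u] h_bound[OF u assms(4)] pd_nn[of \<gamma> \<gamma>'] assms(3)
      by (intro mult_mono) auto
  qed
  also have "\<dots> = NJ * (real CARD('i) * d) * (Cm + beta i * B)" by (simp add: NJ_def)
  finally show ?thesis .
qed

definition Jb where "Jb i = Cm / (1 - beta i)"
definition KJ where "KJ i = NJ * real CARD('i) * (Cm + beta i * Jb i) / (1 - beta i)"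

lemma KJ_nn: "0 \<le> KJ i"
  unfolding KJ_def Jb_def NJ_def using Cm_nn b0[of i] b1[of i] by (auto intro!: divide_nonneg_nonneg mult_nonneg_nonneg add_nonneg_nonneg)

lemma J_lip1: assumes "\<gamma> \<in> JP" "\<gamma>' \<in> JP" "pol_dist U \<gamma> \<gamma>' \<le> d"
  shows "J i \<gamma> s \<le> J i \<gamma>' s + KJ i * d"
proof -
  have "J i \<gamma> s \<le> J i \<gamma>' s + (NJ * (real CARD('i) * d) * (Cm + beta i * Jb i)) / (1 - beta i)"
  proof (rule compare[OF assms(2)])
    fix s
    have "\<bar>T i \<gamma> (J i \<gamma>) s - T i \<gamma>' (J i \<gamma>) s\<bar> \<le> NJ * (real CARD('i) * d) * (Cm + beta i * Jb i)"
      using T_diff[OF assms] J_bound[OF assms(1)] unfolding Jb_def by blast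
    then show "J i \<gamma> s \<le> T i \<gamma>' (J i \<gamma>) s + NJ * (real CARD('i) * d) * (Cm + beta i * Jb i)"
      using bellman[OF assms(1), of i s] by linarith
    show "J i \<gamma>' s = T i \<gamma>' (J i \<gamma>') s" for s by (rule bellman[OF assms(2)])
  qed
  also have "(NJ * (real CARD('i) * d) * (Cm + beta i * Jb i)) / (1 - beta i) = KJ i * d"
    unfolding KJ_def by (simp add: field_simps)
  finally show ?thesis .
qed

lemma J_lip: assumes "\<gamma> \<in> JP" "\<gamma>' \<in> JP" "pol_dist U \<gamma> \<gamma>' \<le> d"
  shows "\<bar>J i \<gamma> s - J i \<gamma>' s\<bar> \<le> KJ i * d"
  using J_lip1[OF assms] J_lip1[OF assms(2,1)] assms(3) pd_sym by (smt (verit))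

end

lemma Min_diff:
  fixes f g :: "'b \<Rightarrow> real"
  assumes "finite A" "A \<noteq> {}" "\<And>a. a \<in> A \<Longrightarrow> \<bar>f a - g a\<bar> \<le> e"
  shows "\<bar>Min (f ` A) - Min (g ` A)\<bar> \<le> e"
proof -
  have "Min (f ` A) \<in> f ` A" "Min (g ` A) \<in> g ` A" using assms by auto
  then obtain a b where a: "a \<in> A" "Min (f ` A) = f a" and b: "b \<in> A" "Min (g ` A) = g b" by blast
  have "Min (f ` A) \<le> f b" using assms(1) b(1) by (intro Min_le) auto
  moreover have "Min (g ` A) \<le> g a" using assms(1) a(1) by (intro Min_le) auto
  ultimately show ?thesis using assms(3)[OF a(1)] assms(3)[OF b(1)] a b by linarith
qed

lemma frac_diff:
  fixes w w' S S' th :: real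
  assumes "0 \<le> w" "w \<le> S" "0 \<le> w'" "w' \<le> S'" "th \<le> S" "th \<le> S'" "0 < th"
  shows "\<bar>w / S - w' / S'\<bar> \<le> (\<bar>w - w'\<bar> + \<bar>S - S'\<bar>) / th"
proof -
  have S0: "S > 0" "S' > 0" using assms by auto
  have eq: "w / S - w' / S' = (w - w') / S + (w' / S') * (S' - S) / S"
    using S0 by (simp add: field_simps)
  have 1: "\<bar>(w - w') / S\<bar> \<le> \<bar>w - w'\<bar> / th"
    unfolding abs_divide using S0 assms by (intro divide_left_mono) auto
  have q: "0 \<le> w' / S'" "w' / S' \<le> 1" using S0 assms by auto
  have "\<bar>w' / S'\<bar> \<le> 1" using q by simp
  from mult_right_mono[OF this abs_ge_zero[of "S' - S"]]
  have "\<bar>(w' / S') * (S' - S)\<bar> \<le> \<bar>S' - S\<bar>" by (simp only: abs_mult mult_1)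
  then have "\<bar>(w' / S') * (S' - S)\<bar> / S \<le> \<bar>S' - S\<bar> / S"
    using S0 by (intro divide_right_mono) auto
  also have "\<dots> \<le> \<bar>S' - S\<bar> / th"
    using S0 assms by (intro divide_left_mono) auto
  finally have 2: "\<bar>(w' / S') * (S' - S) / S\<bar> \<le> \<bar>S - S'\<bar> / th"
    using S0 by (simp add: abs_divide abs_minus_commute)
  have "\<bar>w / S - w' / S'\<bar> \<le> \<bar>(w - w') / S\<bar> + \<bar>(w' / S') * (S' - S) / S\<bar>"
    unfolding eq by (rule abs_triangle_ineq)
  then have "\<bar>w / S - w' / S'\<bar> \<le> \<bar>w - w'\<bar> / th + \<bar>S - S'\<bar> / th"
    using 1 2 by linarith
  then show ?thesis by (simp add: add_divide_distrib)
qed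

context game begin

definition Qf where
  "Qf i \<gamma> W s a = (\<Sum>u\<in>{u\<in>JA. u i = a}. (\<Prod>j\<in>UNIV-{i}. \<gamma> j s (u j)) * (c i s u + beta i * (\<Sum>y\<in>UNIV. P s u y * W y)))"

lemma T_decomp: "T i (\<gamma>(i := \<pi>)) W s = (\<Sum>a\<in>U i. \<pi> s a * Qf i \<gamma> W s a)"
proof -
  define h where "h u = c i s u + beta i * (\<Sum>y\<in>UNIV. P s u y * W y)" for u
  define pr where "pr u = (\<Prod>j\<in>UNIV-{i}. \<gamma> j s (u j))" for u
  have ap: "act_prob (\<gamma>(i := \<pi>)) s u = \<pi> s (u i) * pr u" for u
  proof -
    have "act_prob (\<gamma>(i := \<pi>)) s u = (\<gamma>(i := \<pi>)) i s (u i) * (\<Prod>j\<in>UNIV-{i}. (\<gamma>(i := \<pi>)) j s (u j))"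
      unfolding act_prob_def by (rule prod.remove) auto
    also have "(\<Prod>j\<in>UNIV-{i}. (\<gamma>(i := \<pi>)) j s (u j)) = pr u"
      unfolding pr_def by (intro prod.cong) auto
    finally have "act_prob (\<gamma>(i := \<pi>)) s u = (\<gamma>(i := \<pi>)) i s (u i) * pr u" .
    then show ?thesis by (simp only: fun_upd_same)
  qed
  have "T i (\<gamma>(i := \<pi>)) W s = (\<Sum>u\<in>JA. \<pi> s (u i) * pr u * h u)"
    unfolding T_def h_def ap ..
  also have "\<dots> = (\<Sum>a\<in>U i. \<Sum>u\<in>{u\<in>JA. u i = a}. \<pi> s (u i) * pr u * h u)"
    by (rule sum.group[symmetric]) (use finJA finU JA_mem in auto)
  also have "\<dots> = (\<Sum>a\<in>U i. \<pi> s a * Qf i \<gamma> W s a)"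
    unfolding Qf_def h_def pr_def by (intro sum.cong refl) (auto simp: sum_distrib_left mult.assoc intro!: sum.cong)
  finally show ?thesis .
qed

lemma T_self: "T i \<gamma> W s = (\<Sum>a\<in>U i. \<gamma> i s a * Qf i \<gamma> W s a)"
  using T_decomp[of i \<gamma> "\<gamma> i" W s] by simp

lemma pr_bounds: assumes "\<gamma> \<in> JP" shows "0 \<le> (\<Prod>j\<in>UNIV-{i}. \<gamma> j s (u j))" "(\<Prod>j\<in>UNIV-{i}. \<gamma> j s (u j)) \<le> 1"
  using assms by (auto intro!: prod_nonneg prod_le_1 intro: pol_nn pol_le1 JP_pol)

lemma card_fib: "real (card {u\<in>JA. u i = a}) \<le> NJ"
  unfolding NJ_def using finJA by (simp add: card_mono)

lemma Qf_bound: assumes "\<gamma> \<in> JP" "\<And>y. \<bar>W y\<bar> \<le> B"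
  shows "\<bar>Qf i \<gamma> W s a\<bar> \<le> NJ * (Cm + beta i * B)"
proof -
  have "\<bar>Qf i \<gamma> W s a\<bar> \<le> (\<Sum>u\<in>{u\<in>JA. u i = a}. \<bar>(\<Prod>j\<in>UNIV-{i}. \<gamma> j s (u j)) * (c i s u + beta i * (\<Sum>y\<in>UNIV. P s u y * W y))\<bar>)"
    unfolding Qf_def by (rule sum_abs)
  also have "\<dots> \<le> (\<Sum>u\<in>{u\<in>JA. u i = a}. Cm + beta i * B)"
  proof (rule sum_mono)
    fix u assume u: "u \<in> {u\<in>JA. u i = a}"
    have "\<bar>(\<Prod>j\<in>UNIV-{i}. \<gamma> j s (u j))\<bar> \<le> 1" using pr_bounds[OF assms(1)] by auto
    moreover have "\<bar>c i s u + beta i * (\<Sum>y\<in>UNIV. P s u y * W y)\<bar> \<le> Cm + beta i * B"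
      using u h_bound assms(2) by auto
    ultimately show "\<bar>(\<Prod>j\<in>UNIV-{i}. \<gamma> j s (u j)) * (c i s u + beta i * (\<Sum>y\<in>UNIV. P s u y * W y))\<bar> \<le> Cm + beta i * B"
      unfolding abs_mult using mult_mono[of "\<bar>\<Prod>j\<in>UNIV-{i}. \<gamma> j s (u j)\<bar>" 1 "\<bar>c i s u + beta i * (\<Sum>y\<in>UNIV. P s u y * W y)\<bar>" "Cm + beta i * B"]
      by simp
  qed
  also have "\<dots> = real (card {u\<in>JA. u i = a}) * (Cm + beta i * B)" by simp
  also have "\<dots> \<le> NJ * (Cm + beta i * B)"
  proof (rule mult_right_mono[OF card_fib])
    have "0 \<le> B" using assms(2)[of undefined] by linarith
    then show "0 \<le> Cm + beta i * B" using Cm_nn b0[of i] by simp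
  qed
  finally show ?thesis .
qed

lemma Qf_diff: assumes "\<gamma> \<in> JP" "\<gamma>' \<in> JP" "pol_dist U \<gamma> \<gamma>' \<le> d" "\<And>y. \<bar>W y\<bar> \<le> B" "\<And>y. \<bar>W y - W' y\<bar> \<le> e"
  shows "\<bar>Qf i \<gamma> W s a - Qf i \<gamma>' W' s a\<bar> \<le> NJ * (real CARD('i) * d * (Cm + beta i * B) + beta i * e)"
proof -
  define h where "h W u = c i s u + beta i * (\<Sum>y\<in>UNIV. P s u y * W y)" for W u
  define pr where "pr g u = (\<Prod>j\<in>UNIV-{i}. g j s (u j))" for g :: "'i \<Rightarrow> 'x \<Rightarrow> 'a \<Rightarrow> real" and u
  have d0: "0 \<le> d" using assms(3) pd_nn[of \<gamma> \<gamma>'] by linarith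
  have e0: "0 \<le> e" using assms(5)[of undefined] by linarith
  have "\<bar>Qf i \<gamma> W s a - Qf i \<gamma>' W' s a\<bar> = \<bar>\<Sum>u\<in>{u\<in>JA. u i = a}. pr \<gamma> u * h W u - pr \<gamma>' u * h W' u\<bar>"
    unfolding Qf_def h_def pr_def by (simp add: sum_subtractf)
  also have "\<dots> \<le> (\<Sum>u\<in>{u\<in>JA. u i = a}. \<bar>pr \<gamma> u * h W u - pr \<gamma>' u * h W' u\<bar>)" by (rule sum_abs)
  also have "\<dots> \<le> (\<Sum>u\<in>{u\<in>JA. u i = a}. real CARD('i) * d * (Cm + beta i * B) + beta i * e)"
  proof (rule sum_mono)
    fix u assume u: "u \<in> {u\<in>JA. u i = a}"
    then have uJ: "u \<in> JA" by simp
    have p1: "\<bar>pr \<gamma> u - pr \<gamma>' u\<bar> \<le> real (card (UNIV - {i})) * d"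
      unfolding pr_def
    proof (rule prod_diff_le)
      show "\<forall>j\<in>UNIV - {i}. 0 \<le> \<gamma> j s (u j) \<and> \<gamma> j s (u j) \<le> 1" "\<forall>j\<in>UNIV - {i}. 0 \<le> \<gamma>' j s (u j) \<and> \<gamma>' j s (u j) \<le> 1"
        using assms by (auto intro: pol_nn pol_le1 JP_pol)
      show "\<forall>j\<in>UNIV - {i}. \<bar>\<gamma> j s (u j) - \<gamma>' j s (u j)\<bar> \<le> d"
      proof
        fix j
        show "\<bar>\<gamma> j s (u j) - \<gamma>' j s (u j)\<bar> \<le> d"
          using pd_ge[OF JA_mem[OF uJ], where \<gamma>=\<gamma> and \<pi>=\<gamma>' and s=s and i=j] assms(3) by linarith
      qed
    qed simp
    have "real (card (UNIV - {i})) \<le> real CARD('i)" by (simp add: card_mono)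
    then have p1': "\<bar>pr \<gamma> u - pr \<gamma>' u\<bar> \<le> real CARD('i) * d" using p1 d0 by (meson mult_right_mono order_trans)
    have hb: "\<bar>h W u\<bar> \<le> Cm + beta i * B" unfolding h_def by (rule h_bound[OF uJ assms(4)])
    have hd: "\<bar>h W u - h W' u\<bar> \<le> beta i * e"
    proof -
      have "h W u - h W' u = beta i * (\<Sum>y\<in>UNIV. P s u y * (W y - W' y))"
        unfolding h_def by (simp add: algebra_simps sum_subtractf)
      moreover have "\<bar>\<Sum>y\<in>UNIV. P s u y * (W y - W' y)\<bar> \<le> e" by (rule PW_bound[OF uJ assms(5)])
      ultimately show ?thesis using b0[of i] by (simp add: abs_mult mult_left_mono)
    qed
    have pb: "0 \<le> pr \<gamma>' u" "pr \<gamma>' u \<le> 1" unfolding pr_def using pr_bounds[OF assms(2)] by auto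
    have "pr \<gamma> u * h W u - pr \<gamma>' u * h W' u = (pr \<gamma> u - pr \<gamma>' u) * h W u + pr \<gamma>' u * (h W u - h W' u)"
      by (simp add: algebra_simps)
    also have "\<bar>\<dots>\<bar> \<le> \<bar>pr \<gamma> u - pr \<gamma>' u\<bar> * \<bar>h W u\<bar> + pr \<gamma>' u * \<bar>h W u - h W' u\<bar>"
      using pb by (metis abs_mult abs_of_nonneg abs_triangle_ineq)
    also have "\<dots> \<le> real CARD('i) * d * (Cm + beta i * B) + 1 * (beta i * e)"
      using p1' hb hd pb by (intro add_mono mult_mono) auto
    finally show "\<bar>pr \<gamma> u * h W u - pr \<gamma>' u * h W' u\<bar> \<le> real CARD('i) * d * (Cm + beta i * B) + beta i * e" by simp
  qed
  also have "\<dots> = real (card {u\<in>JA. u i = a}) * (real CARD('i) * d * (Cm + beta i * B) + beta i * e)" by simp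
  also have "\<dots> \<le> NJ * (real CARD('i) * d * (Cm + beta i * B) + beta i * e)"
  proof (rule mult_right_mono[OF card_fib])
    have "0 \<le> B" using assms(4)[of undefined] by linarith
    then show "0 \<le> real CARD('i) * d * (Cm + beta i * B) + beta i * e" using Cm_nn b0[of i] d0 e0 by simp
  qed
  finally show ?thesis .
qed

end

lemma max0_diff: "\<bar>max 0 (x::real) - max 0 y\<bar> \<le> \<bar>x - y\<bar>" by auto

context game begin

definition Qv where "Qv i \<gamma> s a = Qf i \<gamma> (J i \<gamma>) s a"
definition mQ where "mQ i \<gamma> s = Min ((Qv i \<gamma> s) ` U i)"
definition wt where "wt th i \<gamma> s a = max 0 (mQ i \<gamma> s + th i - Qv i \<gamma> s a)"
definition Fm :: "('i \<Rightarrow> real) \<Rightarrow> ('i \<Rightarrow> 'x \<Rightarrow> 'a \<Rightarrow> real) \<Rightarrow> 'i \<Rightarrow> 'x \<Rightarrow> 'a \<Rightarrow> real" where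
  "Fm th \<gamma> = (\<lambda>i s a. if a \<in> U i then wt th i \<gamma> s a / (\<Sum>b\<in>U i. wt th i \<gamma> s b) else 0)"
definition Qb where "Qb i = NJ * (Cm + beta i * Jb i)"
definition LQ where "LQ i = NJ * (real CARD('i) * (Cm + beta i * Jb i) + beta i * KJ i)"
definition LF where "LF th i = 2 * LQ i * (1 + real (card (U i))) / th i"

lemma mQ_le: "a \<in> U i \<Longrightarrow> mQ i \<gamma> s \<le> Qv i \<gamma> s a"
  unfolding mQ_def using finU by (intro Min_le) auto

lemma mQ_in: "\<exists>a0\<in>U i. Qv i \<gamma> s a0 = mQ i \<gamma> s"
proof -
  have "mQ i \<gamma> s \<in> (Qv i \<gamma> s) ` U i" unfolding mQ_def using finU neU by (intro Min_in) auto
  then show ?thesis by force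
qed

lemma wt_nn: "0 \<le> wt th i \<gamma> s a" unfolding wt_def by simp

lemma wsum_ge: assumes "th i > 0" shows "th i \<le> (\<Sum>b\<in>U i. wt th i \<gamma> s b)"
proof -
  obtain a0 where a0: "a0 \<in> U i" "Qv i \<gamma> s a0 = mQ i \<gamma> s" using mQ_in by blast
  have "wt th i \<gamma> s a0 = th i" unfolding wt_def using a0 assms by simp
  moreover have "wt th i \<gamma> s a0 \<le> (\<Sum>b\<in>U i. wt th i \<gamma> s b)"
    using a0 finU wt_nn by (intro member_le_sum) auto
  ultimately show ?thesis by simp
qed

lemma wt_le_sum: "a \<in> U i \<Longrightarrow> wt th i \<gamma> s a \<le> (\<Sum>b\<in>U i. wt th i \<gamma> s b)"
  using finU wt_nn by (intro member_le_sum) auto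

lemma Fm_nn: "0 \<le> Fm th \<gamma> i s a"
  unfolding Fm_def by (auto intro!: divide_nonneg_nonneg sum_nonneg wt_nn)

lemma Fm_JP: assumes "\<And>i. th i > 0" shows "Fm th \<gamma> \<in> JP"
  unfolding joint_policies_def policies_def
proof (intro CollectI allI conjI impI)
  fix i s a
  show "0 \<le> Fm th \<gamma> i s a" by (rule Fm_nn)
  show "a \<notin> U i \<Longrightarrow> Fm th \<gamma> i s a = 0" unfolding Fm_def by simp
next
  fix i s
  have S: "(\<Sum>b\<in>U i. wt th i \<gamma> s b) > 0" using wsum_ge[of th i \<gamma> s] assms[of i] by linarith
  have "(\<Sum>a\<in>U i. Fm th \<gamma> i s a) = (\<Sum>a\<in>U i. wt th i \<gamma> s a / (\<Sum>b\<in>U i. wt th i \<gamma> s b))"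
    unfolding Fm_def by simp
  also have "\<dots> = 1" using S by (simp add: sum_divide_distrib[symmetric])
  finally show "(\<Sum>a\<in>U i. Fm th \<gamma> i s a) = 1" .
qed

lemma Fm_Q: assumes "\<And>i. th i > 0"
  shows "(\<Sum>a\<in>U i. Fm th \<gamma> i s a * Qv i \<gamma> s a) \<le> mQ i \<gamma> s + th i"
proof -
  have "(\<Sum>a\<in>U i. Fm th \<gamma> i s a * Qv i \<gamma> s a) \<le> (\<Sum>a\<in>U i. Fm th \<gamma> i s a * (mQ i \<gamma> s + th i))"
  proof (rule sum_mono)
    fix a assume a: "a \<in> U i"
    show "Fm th \<gamma> i s a * Qv i \<gamma> s a \<le> Fm th \<gamma> i s a * (mQ i \<gamma> s + th i)"
    proof (cases "wt th i \<gamma> s a = 0")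
      case True then show ?thesis unfolding Fm_def by simp
    next
      case False
      then have "Qv i \<gamma> s a \<le> mQ i \<gamma> s + th i" unfolding wt_def by (auto simp: max_def split: if_splits)
      then show ?thesis using Fm_nn by (intro mult_left_mono) auto
    qed
  qed
  also have "\<dots> = (mQ i \<gamma> s + th i) * (\<Sum>a\<in>U i. Fm th \<gamma> i s a)"
    by (subst sum_distrib_left) (simp add: mult.commute)
  also have "(\<Sum>a\<in>U i. Fm th \<gamma> i s a) = 1"
    using pol_sum[OF JP_pol[OF Fm_JP[OF assms]]] by simp
  finally show ?thesis by simp
qed

lemma Qv_bound: assumes "\<gamma> \<in> JP" shows "\<bar>Qv i \<gamma> s a\<bar> \<le> Qb i"
  unfolding Qv_def Qb_def using Qf_bound[OF assms] J_bound[OF assms] unfolding Jb_def by blast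

lemma Qv_diff: assumes "\<gamma> \<in> JP" "\<gamma>' \<in> JP" "pol_dist U \<gamma> \<gamma>' \<le> d"
  shows "\<bar>Qv i \<gamma> s a - Qv i \<gamma>' s a\<bar> \<le> LQ i * d"
proof -
  have "\<bar>Qv i \<gamma> s a - Qv i \<gamma>' s a\<bar> \<le> NJ * (real CARD('i) * d * (Cm + beta i * Jb i) + beta i * (KJ i * d))"
    unfolding Qv_def
  proof (rule Qf_diff[OF assms])
    show "\<bar>J i \<gamma> y\<bar> \<le> Jb i" for y unfolding Jb_def by (rule J_bound[OF assms(1)])
    show "\<bar>J i \<gamma> y - J i \<gamma>' y\<bar> \<le> KJ i * d" for y by (rule J_lip[OF assms])
  qed
  also have "\<dots> = LQ i * d" unfolding LQ_def by (simp add: algebra_simps)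
  finally show ?thesis .
qed

lemma LQ_nn: "0 \<le> LQ i"
  unfolding LQ_def NJ_def Jb_def using Cm_nn b0[of i] b1[of i] KJ_nn[of i]
  by (auto intro!: mult_nonneg_nonneg add_nonneg_nonneg divide_nonneg_nonneg)

lemma Fm_diff: assumes th: "\<And>i. th i > 0" and "\<gamma> \<in> JP" "\<gamma>' \<in> JP" "pol_dist U \<gamma> \<gamma>' \<le> d"
  shows "\<bar>Fm th \<gamma> i s a - Fm th \<gamma>' i s a\<bar> \<le> LF th i * d"
proof (cases "a \<in> U i")
  case False
  have "0 \<le> LF th i * d" unfolding LF_def
    using LQ_nn[of i] th[of i] assms(4) pd_nn[of \<gamma> \<gamma>'] by (auto intro!: mult_nonneg_nonneg divide_nonneg_nonneg)
  then show ?thesis using False unfolding Fm_def by simp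
next
  case a: True
  have d0: "0 \<le> d" using assms(4) pd_nn[of \<gamma> \<gamma>'] by linarith
  have m: "\<bar>mQ i \<gamma> s - mQ i \<gamma>' s\<bar> \<le> LQ i * d"
    unfolding mQ_def using finU neU Qv_diff[OF assms(2-4)] by (intro Min_diff) auto
  have w: "\<bar>wt th i \<gamma> s b - wt th i \<gamma>' s b\<bar> \<le> 2 * LQ i * d" for b
  proof -
    have "\<bar>wt th i \<gamma> s b - wt th i \<gamma>' s b\<bar> \<le> \<bar>(mQ i \<gamma> s + th i - Qv i \<gamma> s b) - (mQ i \<gamma>' s + th i - Qv i \<gamma>' s b)\<bar>"
      unfolding wt_def by (rule max0_diff)
    also have "\<dots> \<le> 2 * LQ i * d" using m Qv_diff[OF assms(2-4), of i s b] by linarith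
    finally show ?thesis .
  qed
  have S: "\<bar>(\<Sum>b\<in>U i. wt th i \<gamma> s b) - (\<Sum>b\<in>U i. wt th i \<gamma>' s b)\<bar> \<le> real (card (U i)) * (2 * LQ i * d)"
  proof -
    have "\<bar>(\<Sum>b\<in>U i. wt th i \<gamma> s b) - (\<Sum>b\<in>U i. wt th i \<gamma>' s b)\<bar> \<le> (\<Sum>b\<in>U i. \<bar>wt th i \<gamma> s b - wt th i \<gamma>' s b\<bar>)"
      by (simp add: sum_subtractf[symmetric])
    also have "\<dots> \<le> (\<Sum>b\<in>U i. 2 * LQ i * d)" by (intro sum_mono w)
    finally show ?thesis by simp
  qed
  have "\<bar>Fm th \<gamma> i s a - Fm th \<gamma>' i s a\<bar> \<le>
      (\<bar>wt th i \<gamma> s a - wt th i \<gamma>' s a\<bar> + \<bar>(\<Sum>b\<in>U i. wt th i \<gamma> s b) - (\<Sum>b\<in>U i. wt th i \<gamma>' s b)\<bar>) / th i"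
    unfolding Fm_def using a
    by (simp, intro frac_diff wt_nn wt_le_sum wsum_ge th)
  also have "\<dots> \<le> (2 * LQ i * d + real (card (U i)) * (2 * LQ i * d)) / th i"
    using w[of a] S th[of i] by (intro divide_right_mono add_mono) auto
  also have "\<dots> = LF th i * d" unfolding LF_def by (simp add: field_simps)
  finally show ?thesis .
qed

lemma afp_eq: assumes th: "\<And>i. th i > 0" and g: "\<gamma> \<in> JP" and dd: "pol_dist U \<gamma> (Fm th \<gamma>) \<le> \<delta>"
  and pi: "\<pi> \<in> policies U i"
  shows "J i \<gamma> s \<le> J i (\<gamma>(i := \<pi>)) s + (th i + real (card (U i)) * \<delta> * Qb i) / (1 - beta i)"
proof (rule compare[OF JP_upd[OF g pi]])
  show "J i (\<gamma>(i := \<pi>)) s = T i (\<gamma>(i := \<pi>)) (J i (\<gamma>(i := \<pi>))) s" for s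
    by (rule bellman[OF JP_upd[OF g pi]])
  fix s
  have "J i \<gamma> s = (\<Sum>a\<in>U i. \<gamma> i s a * Qv i \<gamma> s a)"
    using bellman[OF g, of i s] T_self[of i \<gamma> "J i \<gamma>" s] unfolding Qv_def by simp
  also have "\<dots> = (\<Sum>a\<in>U i. Fm th \<gamma> i s a * Qv i \<gamma> s a) + (\<Sum>a\<in>U i. (\<gamma> i s a - Fm th \<gamma> i s a) * Qv i \<gamma> s a)"
    by (simp add: sum.distrib[symmetric] algebra_simps)
  also have "(\<Sum>a\<in>U i. (\<gamma> i s a - Fm th \<gamma> i s a) * Qv i \<gamma> s a) \<le> (\<Sum>a\<in>U i. \<delta> * Qb i)"
  proof (rule sum_mono)
    fix a assume a: "a \<in> U i"
    have "\<bar>\<gamma> i s a - Fm th \<gamma> i s a\<bar> \<le> \<delta>" using pd_ge[OF a, of \<gamma> s "Fm th \<gamma>"] dd by linarith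
    moreover have "\<bar>Qv i \<gamma> s a\<bar> \<le> Qb i" by (rule Qv_bound[OF g])
    ultimately have "\<bar>(\<gamma> i s a - Fm th \<gamma> i s a) * Qv i \<gamma> s a\<bar> \<le> \<delta> * Qb i"
      unfolding abs_mult by (intro mult_mono) auto
    then show "(\<gamma> i s a - Fm th \<gamma> i s a) * Qv i \<gamma> s a \<le> \<delta> * Qb i" by linarith
  qed
  also have "(\<Sum>a\<in>U i. \<delta> * Qb i) = real (card (U i)) * \<delta> * Qb i" by simp
  finally have 1: "J i \<gamma> s \<le> (\<Sum>a\<in>U i. Fm th \<gamma> i s a * Qv i \<gamma> s a) + real (card (U i)) * \<delta> * Qb i"
    by simp
  have 2: "mQ i \<gamma> s \<le> T i (\<gamma>(i := \<pi>)) (J i \<gamma>) s"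
  proof -
    have "mQ i \<gamma> s = (\<Sum>a\<in>U i. \<pi> s a * mQ i \<gamma> s)"
      using pol_sum[OF pi, of s] by (simp add: sum_distrib_right[symmetric])
    also have "\<dots> \<le> (\<Sum>a\<in>U i. \<pi> s a * Qv i \<gamma> s a)"
      using mQ_le pol_nn[OF pi] by (intro sum_mono mult_left_mono) auto
    also have "\<dots> = T i (\<gamma>(i := \<pi>)) (J i \<gamma>) s" unfolding T_decomp Qv_def ..
    finally show ?thesis .
  qed
  show "J i \<gamma> s \<le> T i (\<gamma>(i := \<pi>)) (J i \<gamma>) s + (th i + real (card (U i)) * \<delta> * Qb i)"
  proof -
    have 3: "(\<Sum>a\<in>U i. Fm th \<gamma> i s a * Qv i \<gamma> s a) \<le> mQ i \<gamma> s + th i" by (rule Fm_Q[OF th])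
    show ?thesis using 1 2 3 by linarith
  qed
qed

end

context game begin

definition nT where "nT = card Tset"
definition ee where "ee = (SOME e. bij_betw e {0..<nT} Tset)"
definition ei where "ei = inv_into {0..<nT} ee"

lemma ee_bij: "bij_betw ee {0..<nT} Tset"
  unfolding ee_def nT_def using ex_bij_betw_nat_finite[OF finTset] by (rule someI_ex)

lemma ee_in: "k < nT \<Longrightarrow> ee k \<in> Tset"
  using ee_bij unfolding bij_betw_def by auto

lemma ei_lt: "t \<in> Tset \<Longrightarrow> ei t < nT"
  using bij_betw_inv_into[OF ee_bij] unfolding ei_def bij_betw_def by auto

lemma ee_ei: "t \<in> Tset \<Longrightarrow> ee (ei t) = t"
  unfolding ei_def using ee_bij by (meson bij_betw_inv_into_right)

definition emb :: "('i \<Rightarrow> 'x \<Rightarrow> 'a \<Rightarrow> real) \<Rightarrow> nat \<Rightarrow> real" where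
  "emb \<gamma> k = (case ee k of (i, s, a) \<Rightarrow> \<gamma> i s a)"

definition cube :: "(nat \<Rightarrow> real) \<Rightarrow> bool" where "cube x \<longleftrightarrow> (\<forall>k<nT. 0 \<le> x k \<and> x k \<le> 1)"

definition yv :: "(nat \<Rightarrow> real) \<Rightarrow> 'i \<Rightarrow> 'x \<Rightarrow> 'a \<Rightarrow> real" where "yv x i s a = x (ei (i, s, a))"
definition Sy where "Sy x i s = (\<Sum>b\<in>U i. yv x i s b)"
definition mx where "mx x i s = max (Sy x i s) 1"
definition a0 where "a0 i = (SOME a. a \<in> U i)"
definition R :: "(nat \<Rightarrow> real) \<Rightarrow> 'i \<Rightarrow> 'x \<Rightarrow> 'a \<Rightarrow> real" where
  "R x = (\<lambda>i s a. if a \<in> U i then yv x i s a / mx x i s + (if a = a0 i then 1 - Sy x i s / mx x i s else 0) else 0)"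
definition NU where "NU = (\<Sum>i\<in>UNIV. real (card (U i)))"
definition KR where "KR = 1 + 3 * NU"

lemma a0_in: "a0 i \<in> U i" unfolding a0_def using neU by (simp add: some_in_eq)

lemma Tset_mem: "a \<in> U i \<Longrightarrow> (i, s, a) \<in> Tset" unfolding Tset_def by auto

lemma yv_cube: "cube x \<Longrightarrow> a \<in> U i \<Longrightarrow> 0 \<le> yv x i s a \<and> yv x i s a \<le> 1"
  unfolding cube_def yv_def using ei_lt[OF Tset_mem] by auto

lemma Sy_nn: "cube x \<Longrightarrow> 0 \<le> Sy x i s"
  unfolding Sy_def using yv_cube by (auto intro: sum_nonneg)

lemma yv_le_Sy: "cube x \<Longrightarrow> a \<in> U i \<Longrightarrow> yv x i s a \<le> Sy x i s"
  unfolding Sy_def using yv_cube finU by (intro member_le_sum) auto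

lemma card_le_NU: "real (card (U i)) \<le> NU"
  unfolding NU_def by (intro member_le_sum) auto

lemma NU_nn: "0 \<le> NU" unfolding NU_def by (auto intro: sum_nonneg)

lemma R_JP: assumes "cube x" shows "R x \<in> JP"
  unfolding joint_policies_def policies_def
proof (intro CollectI allI conjI impI)
  fix i s a
  have m1: "1 \<le> mx x i s" unfolding mx_def by simp
  have q: "Sy x i s / mx x i s \<le> 1" using m1 unfolding mx_def by (auto simp: divide_le_eq_1)
  show "0 \<le> R x i s a" unfolding R_def using yv_cube[OF assms] m1 q by auto
  show "a \<notin> U i \<Longrightarrow> R x i s a = 0" unfolding R_def by simp
next
  fix i s
  have m1: "1 \<le> mx x i s" unfolding mx_def by simp
  have "(\<Sum>a\<in>U i. R x i s a) = (\<Sum>a\<in>U i. yv x i s a / mx x i s) + (\<Sum>a\<in>U i. (if a = a0 i then 1 - Sy x i s / mx x i s else 0))"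
    unfolding R_def by (simp add: sum.distrib)
  also have "\<dots> = Sy x i s / mx x i s + (1 - Sy x i s / mx x i s)"
    using a0_in finU unfolding Sy_def by (simp add: sum_divide_distrib)
  finally show "(\<Sum>a\<in>U i. R x i s a) = 1" by simp
qed

lemma emb_cube: "\<gamma> \<in> JP \<Longrightarrow> cube (emb \<gamma>)"
  unfolding cube_def emb_def using pol_nn[OF JP_pol] pol_le1[OF JP_pol] by (auto split: prod.splits)

lemma emb_diff: assumes "k < nT" shows "\<bar>emb \<gamma> k - emb \<gamma>' k\<bar> \<le> pol_dist U \<gamma> \<gamma>'"
proof -
  obtain i s a where e: "ee k = (i, s, a)" by (cases "ee k") auto
  then have "a \<in> U i" using ee_in[OF assms] unfolding Tset_def by auto
  then show ?thesis unfolding emb_def e using pd_ge by simp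
qed

lemma R_emb: assumes "\<gamma> \<in> JP" shows "R (emb \<gamma>) = \<gamma>"
proof (intro ext)
  fix i s a
  have y: "yv (emb \<gamma>) i s b = \<gamma> i s b" if "b \<in> U i" for b
    unfolding yv_def emb_def using ee_ei[OF Tset_mem[OF that]] by simp
  have S: "Sy (emb \<gamma>) i s = 1" unfolding Sy_def using y pol_sum[OF JP_pol[OF assms]] by simp
  have M: "mx (emb \<gamma>) i s = 1" unfolding mx_def S by simp
  show "R (emb \<gamma>) i s a = \<gamma> i s a"
    unfolding R_def S M using y pol_out[OF JP_pol[OF assms]] by auto
qed

lemma R_lip: assumes x: "cube x" and x': "cube x'" and d: "\<forall>k<nT. \<bar>x k - x' k\<bar> \<le> d"
  shows "pol_dist U (R x) (R x') \<le> KR * d"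
proof (rule pd_le)
  fix i s a assume a: "a \<in> U i"
  have d0: "0 \<le> d" using d ei_lt[OF Tset_mem[OF a]] by (meson abs_ge_zero order_trans)
  have yd: "\<bar>yv x i s b - yv x' i s b\<bar> \<le> d" if "b \<in> U i" for b
    unfolding yv_def using d ei_lt[OF Tset_mem[OF that]] by auto
  have Sd: "\<bar>Sy x i s - Sy x' i s\<bar> \<le> real (card (U i)) * d"
  proof -
    have "\<bar>Sy x i s - Sy x' i s\<bar> \<le> (\<Sum>b\<in>U i. \<bar>yv x i s b - yv x' i s b\<bar>)"
      unfolding Sy_def by (simp add: sum_subtractf[symmetric])
    also have "\<dots> \<le> (\<Sum>b\<in>U i. d)" by (intro sum_mono yd)
    finally show ?thesis by simp
  qed
  have Md: "\<bar>mx x i s - mx x' i s\<bar> \<le> real (card (U i)) * d"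
    using Sd unfolding mx_def by linarith
  have m1: "1 \<le> mx x i s" "1 \<le> mx x' i s" unfolding mx_def by auto
  have f1: "\<bar>yv x i s a / mx x i s - yv x' i s a / mx x' i s\<bar> \<le> d + real (card (U i)) * d"
  proof -
    have "\<bar>yv x i s a / mx x i s - yv x' i s a / mx x' i s\<bar> \<le>
        (\<bar>yv x i s a - yv x' i s a\<bar> + \<bar>mx x i s - mx x' i s\<bar>) / 1"
      using yv_cube[OF x a] yv_cube[OF x' a] yv_le_Sy[OF x a, of s] yv_le_Sy[OF x' a, of s] m1
      by (intro frac_diff) (auto simp: mx_def le_max_iff_disj)
    then show ?thesis using yd[OF a] Md by simp
  qed
  have f2: "\<bar>Sy x i s / mx x i s - Sy x' i s / mx x' i s\<bar> \<le> 2 * (real (card (U i)) * d)"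
  proof -
    have "\<bar>Sy x i s / mx x i s - Sy x' i s / mx x' i s\<bar> \<le>
        (\<bar>Sy x i s - Sy x' i s\<bar> + \<bar>mx x i s - mx x' i s\<bar>) / 1"
      using Sy_nn[OF x] Sy_nn[OF x'] m1
      by (intro frac_diff) (auto simp: mx_def)
    then show ?thesis using Sd Md by simp
  qed
  have "\<bar>R x i s a - R x' i s a\<bar> \<le> \<bar>yv x i s a / mx x i s - yv x' i s a / mx x' i s\<bar> + \<bar>Sy x i s / mx x i s - Sy x' i s / mx x' i s\<bar>"
  proof -
    have eqR: "R x i s a - R x' i s a = (yv x i s a / mx x i s - yv x' i s a / mx x' i s)
       - (if a = a0 i then Sy x i s / mx x i s - Sy x' i s / mx x' i s else 0)"
      unfolding R_def using a by (simp add: algebra_simps)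
    show ?thesis unfolding eqR by (cases "a = a0 i") (simp_all add: abs_triangle_ineq4)
  qed
  also have "\<dots> \<le> d + real (card (U i)) * d + 2 * (real (card (U i)) * d)"
    using f1 f2 by linarith
  also have "\<dots> = (1 + 3 * real (card (U i))) * d" by (simp add: algebra_simps)
  also have "\<dots> \<le> KR * d" unfolding KR_def using card_le_NU[of i] d0 by (intro mult_right_mono) auto
  finally show "\<bar>R x i s a - R x' i s a\<bar> \<le> KR * d" .
qed

end

context game begin

definition Gm where "Gm th x = emb (Fm th (R x))"
definition LFs where "LFs th = (\<Sum>i\<in>UNIV. LF th i)"

lemma KR_ge1: "1 \<le> KR" using NU_nn unfolding KR_def by simp

lemma LF_nn: "th i > 0 \<Longrightarrow> 0 \<le> LF th i"
  unfolding LF_def using LQ_nn[of i] by (auto intro!: divide_nonneg_nonneg mult_nonneg_nonneg)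

lemma LF_le: "(\<And>i. th i > 0) \<Longrightarrow> LF th i \<le> LFs th"
  unfolding LFs_def using LF_nn by (intro member_le_sum) auto

lemma LFs_nn: "(\<And>i. th i > 0) \<Longrightarrow> 0 \<le> LFs th"
  unfolding LFs_def using LF_nn by (auto intro: sum_nonneg)

lemma G_cube: "(\<And>i. th i > 0) \<Longrightarrow> cube (Gm th x)"
  unfolding Gm_def by (intro emb_cube Fm_JP)

lemma G_lip: assumes th: "\<And>i. th i > 0" and x: "cube x" and x': "cube x'" and d: "\<forall>k<nT. \<bar>x k - x' k\<bar> \<le> d"
  shows "\<forall>k<nT. \<bar>Gm th x k - Gm th x' k\<bar> \<le> (LFs th * KR) * d"
proof (intro allI impI)
  fix k assume k: "k < nT"
  have pR: "pol_dist U (R x) (R x') \<le> KR * d" by (rule R_lip[OF x x' d])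
  have d1: "0 \<le> KR * d" using pR pd_nn[of "R x" "R x'"] by linarith
  have "pol_dist U (Fm th (R x)) (Fm th (R x')) \<le> LFs th * (KR * d)"
  proof (rule pd_le)
    fix i s a assume "a \<in> U i"
    have "\<bar>Fm th (R x) i s a - Fm th (R x') i s a\<bar> \<le> LF th i * (KR * d)"
      by (rule Fm_diff[OF th R_JP[OF x] R_JP[OF x'] pR])
    also have "\<dots> \<le> LFs th * (KR * d)" using LF_le[OF th] d1 by (intro mult_right_mono) auto
    finally show "\<bar>Fm th (R x) i s a - Fm th (R x') i s a\<bar> \<le> LFs th * (KR * d)" .
  qed
  then show "\<bar>Gm th x k - Gm th x' k\<bar> \<le> (LFs th * KR) * d"
    unfolding Gm_def using emb_diff[OF k, of "Fm th (R x)" "Fm th (R x')"] by (simp add: mult.assoc)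
qed

lemma Qb_nn: "0 \<le> Qb i"
  unfolding Qb_def NJ_def Jb_def using Cm_nn b0[of i] b1[of i]
  by (auto intro!: mult_nonneg_nonneg add_nonneg_nonneg divide_nonneg_nonneg)

lemma exists_eq: assumes eps: "\<epsilon> > 0"
  shows "\<exists>\<gamma>\<in>JP. \<forall>i \<pi> s. \<pi> \<in> policies U i \<longrightarrow> J i \<gamma> s \<le> J i (\<gamma>(i := \<pi>)) s + \<epsilon> / 2"
proof -
  define th where "th i = \<epsilon> * (1 - beta i) / 4" for i
  have th0: "th i > 0" for i unfolding th_def using eps b1[of i] by simp
  define Z where "Z = (\<Sum>i\<in>UNIV. real (card (U i)) * Qb i / th i)"
  have nn: "0 \<le> real (card (U j)) * Qb j / th j" for j
    using Qb_nn[of j] th0[of j] by simp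
  have Zi: "real (card (U i)) * Qb i / th i \<le> Z" for i
    unfolding Z_def using nn by (intro member_le_sum) auto
  have Z0: "0 \<le> Z" unfolding Z_def using nn by (auto intro: sum_nonneg)
  define \<delta> where "\<delta> = 1 / (Z + 1)"
  have \<delta>0: "\<delta> > 0" unfolding \<delta>_def using Z0 by simp
  define \<eta> where "\<eta> = \<delta> / KR"
  have \<eta>0: "\<eta> > 0" unfolding \<eta>_def using \<delta>0 KR_ge1 by simp
  obtain z where zc: "\<forall>k<nT. 0 \<le> z k \<and> z k \<le> 1" and zf: "\<forall>k<nT. \<bar>Gm th z k - z k\<bar> \<le> \<eta>"
  proof -
    have "\<exists>z. (\<forall>k<nT. 0 \<le> z k \<and> z k \<le> 1) \<and> (\<forall>k<nT. \<bar>Gm th z k - z k\<bar> \<le> \<eta>)"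
    proof (rule approx_fp)
      show "\<forall>k<nT. 0 \<le> Gm th x k \<and> Gm th x k \<le> 1" for x
        using G_cube[where th=th, OF th0] unfolding cube_def by blast
      show "\<forall>k<nT. \<bar>Gm th x k - Gm th y k\<bar> \<le> (LFs th * KR) * d"
        if "\<forall>k<nT. 0 \<le> x k \<and> x k \<le> 1" "\<forall>k<nT. 0 \<le> y k \<and> y k \<le> 1" "\<forall>k<nT. \<bar>x k - y k\<bar> \<le> d" for x y d
        using G_lip[where th=th, OF th0 _ _ that(3)] that(1,2) unfolding cube_def by blast
      show "0 \<le> LFs th * KR" using LFs_nn[where th=th, OF th0] KR_ge1 by simp
      show "\<eta> > 0" by (rule \<eta>0)
    qed
    then show ?thesis using that by blast
  qed
  define \<gamma> where "\<gamma> = R z"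
  have zc': "cube z" unfolding cube_def using zc by blast
  have g: "\<gamma> \<in> JP" unfolding \<gamma>_def by (rule R_JP[OF zc'])
  have Gz: "Gm th z = emb (Fm th \<gamma>)" unfolding Gm_def \<gamma>_def ..
  have "pol_dist U \<gamma> (Fm th \<gamma>) = pol_dist U (R z) (R (Gm th z))"
    unfolding Gz R_emb[OF Fm_JP[where th=th, OF th0]] \<gamma>_def ..
  also have "\<dots> \<le> KR * \<eta>"
    using zf by (intro R_lip[OF zc' G_cube[where th=th, OF th0]]) (auto simp: abs_minus_commute)
  also have "\<dots> = \<delta>" unfolding \<eta>_def using KR_ge1 by simp
  finally have dd: "pol_dist U \<gamma> (Fm th \<gamma>) \<le> \<delta>" .
  show ?thesis
  proof (intro bexI[OF _ g] allI impI)
    fix i and \<pi> :: "'x \<Rightarrow> 'a \<Rightarrow> real" and s assume pi: "\<pi> \<in> policies U i"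
    have 1: "J i \<gamma> s \<le> J i (\<gamma>(i := \<pi>)) s + (th i + real (card (U i)) * \<delta> * Qb i) / (1 - beta i)"
      by (rule afp_eq[where th=th, OF th0 g dd pi])
    have "real (card (U i)) * \<delta> * Qb i = (real (card (U i)) * Qb i / th i) * \<delta> * th i"
      using th0[of i] by (simp add: field_simps)
    also have "\<dots> \<le> Z * \<delta> * th i"
      using Zi[of i] \<delta>0 th0[of i] by (intro mult_right_mono) auto
    also have "Z * \<delta> \<le> 1" unfolding \<delta>_def using Z0 by simp
    then have "Z * \<delta> * th i \<le> th i" using th0[of i] by (simp add: mult_left_le_one_le)
    finally have 2: "real (card (U i)) * \<delta> * Qb i \<le> th i" .
    have "(th i + real (card (U i)) * \<delta> * Qb i) / (1 - beta i) \<le> (2 * th i) / (1 - beta i)"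
      using 2 b1[of i] by (intro divide_right_mono) auto
    also have "\<dots> = \<epsilon> / 2" unfolding th_def using b1[of i] by (simp add: field_simps)
    finally show "J i \<gamma> s \<le> J i (\<gamma>(i := \<pi>)) s + \<epsilon> / 2" using 1 by linarith
  qed
qed

end

theorem corollary1:
  fixes U :: "'i::finite \<Rightarrow> 'a set"
    and P :: "'x::finite \<Rightarrow> ('i \<Rightarrow> 'a) \<Rightarrow> 'x \<Rightarrow> real"
    and c :: "'i \<Rightarrow> 'x \<Rightarrow> ('i \<Rightarrow> 'a) \<Rightarrow> real"
    and beta :: "'i \<Rightarrow> real"
    and \<epsilon> :: real
  assumes "valid_game U P beta"
    and "\<epsilon> > 0"
  shows "\<exists>\<xi>>0. \<forall>Qz :: 'i \<Rightarrow> ('x \<Rightarrow> 'a \<Rightarrow> real) set.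
           (\<forall>i. Qz i \<subseteq> policies U i \<and> finite (Qz i)) \<and>
           (\<forall>\<gamma>\<in>joint_policies U. \<exists>\<pi>. (\<forall>i. \<pi> i \<in> Qz i) \<and> pol_dist U \<gamma> \<pi> \<le> \<xi>)
           \<longrightarrow> (\<exists>\<pi>. (\<forall>i. \<pi> i \<in> Qz i) \<and> \<pi> \<in> eps_equilibria U P c beta \<epsilon>)"
proof -
  interpret g: game U P c beta by unfold_locales (rule assms(1))
  obtain \<gamma> where \<gamma>: "\<gamma> \<in> joint_policies U"
    and geq: "\<forall>i \<pi> s. \<pi> \<in> policies U i \<longrightarrow> g.J i \<gamma> s \<le> g.J i (\<gamma>(i := \<pi>)) s + \<epsilon> / 2"
    using g.exists_eq[OF assms(2)] by blast
  define K where "K = (\<Sum>i\<in>UNIV. g.KJ i)"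
  have K0: "0 \<le> K" unfolding K_def using g.KJ_nn by (auto intro: sum_nonneg)
  have KJK: "g.KJ i \<le> K" for i unfolding K_def using g.KJ_nn by (intro member_le_sum) auto
  define \<xi> where "\<xi> = \<epsilon> / (4 * K + 4)"
  have \<xi>0: "\<xi> > 0" unfolding \<xi>_def using K0 assms(2) by simp
  have key: "2 * (K * \<xi>) \<le> \<epsilon> / 2"
  proof -
    have "2 * (K * \<xi>) = \<epsilon> * (4 * K) / (4 * K + 4) / 2" unfolding \<xi>_def using K0 by (simp add: field_simps)
    also have "\<dots> \<le> \<epsilon> * (4 * K + 4) / (4 * K + 4) / 2"
      using K0 assms(2) by (intro divide_right_mono mult_left_mono) auto
    also have "\<dots> = \<epsilon> / 2" using K0 by simp
    finally show ?thesis .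
  qed
  show ?thesis
  proof (intro exI[of _ \<xi>] conjI \<xi>0 allI impI)
    fix Qz :: "'i \<Rightarrow> ('x \<Rightarrow> 'a \<Rightarrow> real) set"
    assume H: "(\<forall>i. Qz i \<subseteq> policies U i \<and> finite (Qz i)) \<and>
           (\<forall>\<gamma>\<in>joint_policies U. \<exists>\<pi>. (\<forall>i. \<pi> i \<in> Qz i) \<and> pol_dist U \<gamma> \<pi> \<le> \<xi>)"
    obtain \<pi> where \<pi>Q: "\<forall>i. \<pi> i \<in> Qz i" and pd: "pol_dist U \<gamma> \<pi> \<le> \<xi>" using H \<gamma> by blast
    have \<pi>J: "\<pi> \<in> joint_policies U" using \<pi>Q H unfolding joint_policies_def by blast
    have "\<pi> \<in> eps_equilibria U P c beta \<epsilon>"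
      unfolding eps_equilibria_def eps_best_response_def
    proof (rule CollectI, rule conjI[OF \<pi>J], intro allI)
      fix i x
      have "cost_J U P c beta i x \<pi> - \<epsilon> \<le> (INF \<sigma>\<in>policies U i. cost_J U P c beta i x (\<pi>(i := \<sigma>)))"
      proof (rule cINF_greatest)
        show "policies U i \<noteq> ({} :: ('x \<Rightarrow> 'a \<Rightarrow> real) set)" using g.JP_pol[OF \<pi>J, of i] by blast
        fix \<sigma> :: "'x \<Rightarrow> 'a \<Rightarrow> real" assume \<sigma>: "\<sigma> \<in> policies U i"
        have pd': "pol_dist U \<pi> \<gamma> \<le> \<xi>" using pd g.pd_sym[of \<gamma> \<pi>] by (simp only:)
        have 1: "g.J i \<pi> x \<le> g.J i \<gamma> x + g.KJ i * \<xi>" by (rule g.J_lip1[OF \<pi>J \<gamma> pd'])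
        have 2: "g.J i \<gamma> x \<le> g.J i (\<gamma>(i := \<sigma>)) x + \<epsilon> / 2" by (rule geq[rule_format, OF \<sigma>])
        have pd2: "pol_dist U (\<gamma>(i := \<sigma>)) (\<pi>(i := \<sigma>)) \<le> \<xi>"
        proof (rule g.pd_le)
          fix j s a assume a: "a \<in> U j"
          show "\<bar>(\<gamma>(i := \<sigma>)) j s a - (\<pi>(i := \<sigma>)) j s a\<bar> \<le> \<xi>"
          proof (cases "j = i")
            case True then show ?thesis using \<xi>0 by simp
          next
            case False then show ?thesis using g.pd_ge[OF a, where \<gamma>=\<gamma> and s=s and \<pi>=\<pi>] pd by simp
          qed
        qed
        have 3: "g.J i (\<gamma>(i := \<sigma>)) x \<le> g.J i (\<pi>(i := \<sigma>)) x + g.KJ i * \<xi>"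
          by (rule g.J_lip1[OF g.JP_upd[OF \<gamma> \<sigma>] g.JP_upd[OF \<pi>J \<sigma>] pd2])
        have 4: "g.KJ i * \<xi> \<le> K * \<xi>" using KJK[of i] \<xi>0 by (intro mult_right_mono) auto
        show "cost_J U P c beta i x \<pi> - \<epsilon> \<le> cost_J U P c beta i x (\<pi>(i := \<sigma>))"
          using 1 2 3 4 key unfolding g.J_def by linarith
      qed
      then show "cost_J U P c beta i x \<pi> \<le> (INF \<sigma>\<in>policies U i. cost_J U P c beta i x (\<pi>(i := \<sigma>))) + \<epsilon>"
        by linarith
    qed
    then show "\<exists>\<pi>. (\<forall>i. \<pi> i \<in> Qz i) \<and> \<pi> \<in> eps_equilibria U P c beta \<epsilon>" using \<pi>Q by blast
  qed
qed

end
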